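(* Let $\mathbf{A}\in\mathbb{R}^{n\times d}$ and let $\mathbf{B}\in\mathbb{R}^{n\times d_B}$ have rank $m$. Let $\mathbf{B}\mathbf{B}^{\rm T}=\mathbf{U}\boldsymbol\Sigma\mathbf{U}^{\rm T}$ with $\mathbf{U}\in\mathbb{R}^{n\times m}$, $\mathbf{U}^{\rm T}\mathbf{U}=\mathbf{I}_m$, $\boldsymbol\Sigma=\mathrm{diag}(b_1,\dots,b_m)$, $b_i>0$. Then for each integer $k\in[1,m]$, $$P_k(x;\mathbf{B}\mathbf{B}^\dagger\mathbf{A},\mathbf{B})=\frac{x^{d+k-m}}{k!}\Big(\prod_{i=1}^m\partial_{z_i}\Big)\Big(h_k(z_1,\dots,z_m)\det[\mathbf{Z}-\mathbf{U}^{\rm T}\mathbf{A}\mathbf{A}^{\rm T}\mathbf{U}]\Big)\Big|_{z_i=x/2\ \forall i\in[m]},$$ where $\mathbf{Z}=\mathrm{diag}(z_1,\dots,z_m)$ and $$h_k(z_1,\dots,z_m)=(b_1\partial_{z_1}+\cdots+b_m\partial_{z_m})^k\prod_{i=1}^m z_i=k!\sum_{S\subset[m],|S|=m-k}\mathbf{b}^{S^C}\mathbf{Z}^S.$$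
   Context: For $S\subset[m]$: $\mathbf{b}^S=\prod_{i\in S}b_i$, $\mathbf{Z}^S=\prod_{i\in S}z_i$, $S^C=[m]\setminus S$. $\mathbf{B}_{:,S}$ is the column submatrix indexed by $S$; $\mathbf{M}^\dagger$ is the Moore–Penrose pseudoinverse with $\mathbf{B}_{:,S}^\dagger:=(\mathbf{B}_{:,S})^\dagger$. For $\mathbf{A}'\in\mathbb{R}^{n\times d}$, $P_k(x;\mathbf{A}',\mathbf{B})=\sum_{S\subset[d_B],|S|=k}\det[(\mathbf{B}_{:,S})^{\rm T}\mathbf{B}_{:,S}]\det[x\mathbf{I}_d-\mathbf{A}'^{\rm T}(\mathbf{I}_n-\mathbf{B}_{:,S}\mathbf{B}_{:,S}^\dagger)\mathbf{A}']$. *)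

theory Defs
  imports "HOL-Analysis.Derivative" "Jordan_Normal_Form.DL_Rank" "Jordan_Normal_Form.DL_Submatrix" "Jordan_Normal_Form.Determinant"
begin

definition pinv :: "real mat \<Rightarrow> real mat" where
  "pinv M = (THE X. X \<in> carrier_mat (dim_col M) (dim_row M) \<and>
       M * X * M = M \<and> X * M * X = X \<and>
       (M * X)\<^sup>T = M * X \<and> (X * M)\<^sup>T = X * M)"

definition colsub :: "real mat \<Rightarrow> nat set \<Rightarrow> real mat" where
  "colsub B S = submatrix B {0..<dim_row B} S"

(* P_k(x; A', B); indices are 0-based, [d_B] = {0..<dim_col B} *)
definition Pk :: "nat \<Rightarrow> real \<Rightarrow> real mat \<Rightarrow> real mat \<Rightarrow> real" where
  "Pk k x A' B = (\<Sum>S \<in> {S. S \<subseteq> {0..<dim_col B} \<and> card S = k}.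
      det ((colsub B S)\<^sup>T * colsub B S) *
      det (x \<cdot>\<^sub>m 1\<^sub>m (dim_col A') -
           A'\<^sup>T * (1\<^sub>m (dim_row A') - colsub B S * pinv (colsub B S)) * A'))"

definition pd :: "nat \<Rightarrow> ((nat \<Rightarrow> real) \<Rightarrow> real) \<Rightarrow> (nat \<Rightarrow> real) \<Rightarrow> real" where
  "pd i f z = deriv (\<lambda>t. f (z(i := t))) (z i)"

fun mixd :: "nat \<Rightarrow> ((nat \<Rightarrow> real) \<Rightarrow> real) \<Rightarrow> (nat \<Rightarrow> real) \<Rightarrow> real" where
  "mixd 0 f = f"
| "mixd (Suc j) f = pd j (mixd j f)"

definition dirD :: "nat \<Rightarrow> (nat \<Rightarrow> real) \<Rightarrow> ((nat \<Rightarrow> real) \<Rightarrow> real) \<Rightarrow> (nat \<Rightarrow> real) \<Rightarrow> real" where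
  "dirD m b f z = (\<Sum>i<m. b i * pd i f z)"

definition hk :: "nat \<Rightarrow> (nat \<Rightarrow> real) \<Rightarrow> nat \<Rightarrow> (nat \<Rightarrow> real) \<Rightarrow> real" where
  "hk m b k = ((dirD m b) ^^ k) (\<lambda>z. \<Prod>i<m. z i)"

end

theory Submission
  imports Defs
begin
definition detI :: "(nat \<Rightarrow> nat \<Rightarrow> real) \<Rightarrow> nat set \<Rightarrow> real" where
  "detI N I = (\<Sum>p\<in>{p. p permutes I}. of_int (sign p) * (\<Prod>i\<in>I. N i (p i)))"

lemma perm_fix:
  assumes "A \<subseteq> I"
  shows "{p. p permutes I \<and> (\<forall>i\<in>I-A. p i = i)} = {p. p permutes A}"
proof -
  have "p permutes I \<and> (\<forall>i\<in>I-A. p i = i) \<longleftrightarrow> p permutes A" for p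
    unfolding permutes_def using assms by blast
  thus ?thesis by blast
qed

lemma detI_cong: "(\<And>i j. i \<in> I \<Longrightarrow> j \<in> I \<Longrightarrow> N i j = N' i j) \<Longrightarrow> detI N I = detI N' I"
  unfolding detI_def
  by (intro sum.cong refl arg_cong2[where f="(*)"] prod.cong) (auto dest: permutes_in_image)

lemma detI_expand:
  assumes fin: "finite I"
  shows "detI (\<lambda>i j. (if i = j then z i else 0) + N i j) I
       = (\<Sum>A\<in>Pow I. (\<Prod>i\<in>I-A. z i) * detI N A)"
proof -
  let ?P = "{p. p permutes I}"
  have fP: "finite ?P" using fin by (simp add: finite_permutations)
  have "detI (\<lambda>i j. (if i = j then z i else 0) + N i j) I
     = (\<Sum>p\<in>?P. of_int (sign p) * (\<Sum>A\<in>Pow I. (\<Prod>i\<in>A. N i (p i)) * (\<Prod>i\<in>I-A. (if i = p i then z i else 0))))"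
    unfolding detI_def
  proof (intro sum.cong refl arg_cong2[where f="(*)"])
    fix p
    have "(\<Prod>i\<in>I. (if i = p i then z i else 0) + N i (p i)) = (\<Prod>i\<in>I. N i (p i) + (if i = p i then z i else 0))"
      by (simp add: add.commute)
    also have "\<dots> = (\<Sum>A\<in>Pow I. (\<Prod>i\<in>A. N i (p i)) * (\<Prod>i\<in>I-A. (if i = p i then z i else 0)))"
      by (rule prod_add[OF fin])
    finally show "(\<Prod>i\<in>I. (if i = p i then z i else 0) + N i (p i)) = (\<Sum>A\<in>Pow I. (\<Prod>i\<in>A. N i (p i)) * (\<Prod>i\<in>I-A. (if i = p i then z i else 0)))" .
  qed
  also have "\<dots> = (\<Sum>p\<in>?P. \<Sum>A\<in>Pow I. of_int (sign p) * ((\<Prod>i\<in>A. N i (p i)) * (\<Prod>i\<in>I-A. (if i = p i then z i else 0))))"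
    by (simp add: sum_distrib_left)
  also have "\<dots> = (\<Sum>A\<in>Pow I. \<Sum>p\<in>?P. of_int (sign p) * ((\<Prod>i\<in>A. N i (p i)) * (\<Prod>i\<in>I-A. (if i = p i then z i else 0))))"
    by (rule sum.swap)
  also have "\<dots> = (\<Sum>A\<in>Pow I. (\<Prod>i\<in>I-A. z i) * detI N A)"
  proof (rule sum.cong[OF refl])
    fix A assume A: "A \<in> Pow I"
    have "(\<Sum>p\<in>?P. of_int (sign p) * ((\<Prod>i\<in>A. N i (p i)) * (\<Prod>i\<in>I-A. (if i = p i then z i else 0))))
        = (\<Sum>p\<in>?P. if (\<forall>i\<in>I-A. p i = i) then (\<Prod>i\<in>I-A. z i) * (of_int (sign p) * (\<Prod>i\<in>A. N i (p i))) else 0)"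
    proof (rule sum.cong[OF refl])
      fix p assume "p \<in> ?P"
      show "of_int (sign p) * ((\<Prod>i\<in>A. N i (p i)) * (\<Prod>i\<in>I-A. (if i = p i then z i else 0)))
          = (if (\<forall>i\<in>I-A. p i = i) then (\<Prod>i\<in>I-A. z i) * (of_int (sign p) * (\<Prod>i\<in>A. N i (p i))) else 0)"
      proof (cases "\<forall>i\<in>I-A. p i = i")
        case True
        hence "(\<Prod>i\<in>I-A. (if i = p i then z i else 0)) = (\<Prod>i\<in>I-A. z i)"
          by (intro prod.cong) auto
        thus ?thesis using True by simp
      next
        case False
        then obtain i where "i \<in> I - A" "p i \<noteq> i" by blast
        hence "(\<Prod>i\<in>I-A. (if i = p i then z i else 0)) = 0"
          using fin by (intro prod_zero) (auto intro!: bexI[of _ i])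
        thus ?thesis using False by auto
      qed
    qed
    also have "\<dots> = (\<Sum>p\<in>{p\<in>?P. \<forall>i\<in>I-A. p i = i}. (\<Prod>i\<in>I-A. z i) * (of_int (sign p) * (\<Prod>i\<in>A. N i (p i))))"
      by (rule sum.inter_filter[OF fP, symmetric])
    also have "{p\<in>?P. \<forall>i\<in>I-A. p i = i} = {p. p permutes A}"
      using perm_fix[of A I] A by auto
    finally show "(\<Sum>p\<in>?P. of_int (sign p) * ((\<Prod>i\<in>A. N i (p i)) * (\<Prod>i\<in>I-A. (if i = p i then z i else 0))))
        = (\<Prod>i\<in>I-A. z i) * detI N A"
      unfolding detI_def by (simp add: sum_distrib_left)
  qed
  finally show ?thesis .
qed

lemma detI_reindex:
  assumes inj: "inj_on f I" and fin: "finite I"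
  shows "detI N (f ` I) = detI (\<lambda>i j. N (f i) (f j)) I"
proof -
  have bij: "bij_betw f I (f ` I)" using inj by (simp add: bij_betw_imageI)
  let ?g = "\<lambda>q x. if x \<in> f ` I then f (q (inv_into I f x)) else x"
  have bp: "bij_betw ?g {q. q permutes I} {p. p permutes (f ` I)}"
    by (rule bij_betw_permutations[OF bij])
  have "detI N (f ` I) = (\<Sum>q\<in>{q. q permutes I}. of_int (sign (?g q)) * (\<Prod>i\<in>f ` I. N i (?g q i)))"
    unfolding detI_def by (rule sum.reindex_bij_betw[OF bp, symmetric])
  also have "\<dots> = (\<Sum>q\<in>{q. q permutes I}. of_int (sign q) * (\<Prod>j\<in>I. N (f j) (f (q j))))"
  proof (rule sum.cong[OF refl])
    fix q assume q: "q \<in> {q. q permutes I}"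
    interpret pb: permutes_bij_finite q I "f ` I" f "inv_into I f" "?g q"
      by unfold_locales (use q bij fin inj in auto)
    have s: "sign (?g q) = sign q" by (rule pb.sign_p')
    have "(\<Prod>i\<in>f ` I. N i (?g q i)) = (\<Prod>j\<in>I. N (f j) (?g q (f j)))"
      by (rule prod.reindex[OF inj, unfolded comp_def])
    also have "\<dots> = (\<Prod>j\<in>I. N (f j) (f (q j)))"
      using inj by (intro prod.cong) auto
    finally show "of_int (sign (?g q)) * (\<Prod>i\<in>f ` I. N i (?g q i)) = of_int (sign q) * (\<Prod>j\<in>I. N (f j) (f (q j)))"
      using s by simp
  qed
  finally show ?thesis unfolding detI_def .
qed

lemma det_detI:
  assumes "M \<in> carrier_mat n n"
  shows "det M = detI (\<lambda>i j. M $$ (i,j)) {0..<n}"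
  unfolding det_def'[OF assms] detI_def by simp

definition mpoly :: "'a set \<Rightarrow> ('a \<Rightarrow> real) \<Rightarrow> ('a \<Rightarrow> nat \<Rightarrow> nat) \<Rightarrow> nat \<Rightarrow> (nat \<Rightarrow> real) \<Rightarrow> real" where
  "mpoly F c e m z = (\<Sum>a\<in>F. c a * (\<Prod>i<m. z i ^ e a i))"

lemma mono_deriv:
  fixes z :: "nat \<Rightarrow> real" and m j :: nat
  assumes j: "j < m"
  shows "((\<lambda>t. \<Prod>i<m. (z(j:=t)) i ^ q i) has_real_derivative
          of_nat (q j) * (\<Prod>i<m. (z(j:=t)) i ^ (if i = j then q i - 1 else q i))) (at t)"
proof -
  let ?R = "\<Prod>i\<in>{..<m}-{j}. z i ^ q i"
  have e1: "(\<Prod>i<m. (z(j:=s)) i ^ q i) = s ^ q j * ?R" for s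
  proof -
    have "(\<Prod>i<m. (z(j:=s)) i ^ q i) = (z(j:=s)) j ^ q j * (\<Prod>i\<in>{..<m}-{j}. (z(j:=s)) i ^ q i)"
      using j by (subst prod.remove[where x=j and A="{..<m}"]) auto
    also have "(\<Prod>i\<in>{..<m}-{j}. (z(j:=s)) i ^ q i) = ?R" by (intro prod.cong) auto
    finally show ?thesis by simp
  qed
  have e2: "(\<Prod>i<m. (z(j:=t)) i ^ (if i = j then q i - 1 else q i)) = t ^ (q j - 1) * ?R"
  proof -
    have "(\<Prod>i<m. (z(j:=t)) i ^ (if i = j then q i - 1 else q i)) = (z(j:=t)) j ^ (q j - 1) * (\<Prod>i\<in>{..<m}-{j}. (z(j:=t)) i ^ (if i = j then q i - 1 else q i))"
      using j by (subst prod.remove[where x=j and A="{..<m}"]) auto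
    also have "(\<Prod>i\<in>{..<m}-{j}. (z(j:=t)) i ^ (if i = j then q i - 1 else q i)) = ?R" by (intro prod.cong) auto
    finally show ?thesis by simp
  qed
  have "((\<lambda>s. s ^ q j * ?R) has_real_derivative (of_nat (q j) * t ^ (q j - 1)) * ?R) (at t)"
    by (intro derivative_eq_intros) auto
  thus ?thesis unfolding e1 e2 by (simp add: mult.assoc)
qed

lemma pd_mpoly:
  assumes fin: "finite F" and j: "j < m"
  shows "pd j (mpoly F c e m) = mpoly F (\<lambda>a. c a * of_nat (e a j)) (\<lambda>a i. if i = j then e a i - 1 else e a i) m"
proof
  fix z
  have "((\<lambda>t. mpoly F c e m (z(j:=t))) has_real_derivative
     (\<Sum>a\<in>F. c a * (of_nat (e a j) * (\<Prod>i<m. (z(j:=z j)) i ^ (if i = j then e a i - 1 else e a i))))) (at (z j))"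
    unfolding mpoly_def
    by (intro DERIV_sum DERIV_cmult mono_deriv[OF j])
  hence "pd j (mpoly F c e m) z = (\<Sum>a\<in>F. c a * (of_nat (e a j) * (\<Prod>i<m. (z(j:=z j)) i ^ (if i = j then e a i - 1 else e a i))))"
    unfolding pd_def by (rule DERIV_imp_deriv)
  thus "pd j (mpoly F c e m) z = mpoly F (\<lambda>a. c a * of_nat (e a j)) (\<lambda>a i. if i = j then e a i - 1 else e a i) m z"
    unfolding mpoly_def by (simp add: mult.assoc)
qed

lemma mixd_mpoly:
  assumes fin: "finite F" and j: "j \<le> m"
  shows "mixd j (mpoly F c e m) = mpoly F (\<lambda>a. c a * (\<Prod>i<j. of_nat (e a i))) (\<lambda>a i. if i < j then e a i - 1 else e a i) m"
  using j
proof (induction j)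
  case 0
  show ?case by simp
next
  case (Suc j)
  have "mixd (Suc j) (mpoly F c e m) = pd j (mpoly F (\<lambda>a. c a * (\<Prod>i<j. of_nat (e a i))) (\<lambda>a i. if i < j then e a i - 1 else e a i) m)"
    using Suc by simp
  also have "\<dots> = mpoly F (\<lambda>a. c a * (\<Prod>i<Suc j. of_nat (e a i))) (\<lambda>a i. if i < Suc j then e a i - 1 else e a i) m"
  proof -
    have ee: "(\<lambda>a i. if i = j then (if i < j then e a i - 1 else e a i) - 1 else if i < j then e a i - 1 else e a i) = (\<lambda>a i. if i < Suc j then e a i - 1 else e a i)"
      by (auto simp: fun_eq_iff less_Suc_eq)
    show ?thesis
      using Suc.prems by (subst pd_mpoly[OF fin]) (auto simp: mult.assoc ee)
  qed
  finally show ?case .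
qed

lemma mixd_mpoly_const:
  assumes fin: "finite F"
  shows "mixd m (mpoly F c e m) (\<lambda>i. y) = (\<Sum>a\<in>F. c a * (\<Prod>i<m. of_nat (e a i) * y ^ (e a i - 1)))"
  unfolding mixd_mpoly[OF fin le_refl] mpoly_def
  by (intro sum.cong refl) (simp add: prod.distrib mult.assoc)

definition Fk :: "nat \<Rightarrow> nat \<Rightarrow> nat set set" where
  "Fk m k = {S. S \<subseteq> {..<m} \<and> card S = m - k}"

definition ind :: "nat set \<Rightarrow> nat \<Rightarrow> nat" where
  "ind S i = (if i \<in> S then 1 else 0)"

lemma finite_Fk[simp]: "finite (Fk m k)"
  unfolding Fk_def by (rule finite_subset[of _ "Pow {..<m}"]) auto

lemma dirD_mpoly:
  assumes "finite F"
  shows "dirD m b (mpoly F c e m) z = (\<Sum>i<m. b i * mpoly F (\<lambda>a. c a * of_nat (e a i)) (\<lambda>a l. if l = i then e a l - 1 else e a l) m z)"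
  unfolding dirD_def using pd_mpoly[OF assms] by simp

lemma mono_ind: "S \<subseteq> {..<m} \<Longrightarrow> (\<Prod>l<m. z l ^ ind S l) = (\<Prod>l\<in>S. z l)"
proof -
  assume S: "S \<subseteq> {..<m}"
  have "(\<Prod>l<m. z l ^ ind S l) = (\<Prod>l<m. if l \<in> S then z l else 1)"
    by (intro prod.cong) (auto simp: ind_def)
  also have "\<dots> = (\<Prod>l\<in>S. z l)"
    by (rule prod.mono_neutral_cong_right) (use S in auto)
  finally show ?thesis .
qed

lemma hk_mpoly:
  assumes "k \<le> m"
  shows "hk m b k = mpoly (Fk m k) (\<lambda>S. fact k * (\<Prod>i\<in>{..<m}-S. b i)) ind m"
  using assms
proof (induction k)
  case 0
  have F0: "Fk m 0 = {{..<m}}"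
    unfolding Fk_def using card_subset_eq[of "{..<m}"] by auto
  show ?case
    unfolding hk_def F0 mpoly_def by (auto simp: ind_def)
next
  case (Suc k)
  hence km: "k < m" by simp
  let ?B = "\<lambda>S. (\<Prod>i\<in>{..<m}-S. b i)"
  let ?mono = "\<lambda>S z. (\<Prod>l\<in>S. z l)"
  have IH: "hk m b k = mpoly (Fk m k) (\<lambda>S. fact k * ?B S) ind m" using Suc by simp
  have hs: "hk m b (Suc k) = dirD m b (hk m b k)" unfolding hk_def by simp
  show ?case
  proof
    fix z
    have "hk m b (Suc k) z = (\<Sum>i<m. b i * (\<Sum>S\<in>Fk m k. fact k * ?B S * of_nat (ind S i) *
           (\<Prod>l<m. z l ^ (if l = i then ind S l - 1 else ind S l))))"
      unfolding hs IH dirD_mpoly[OF finite_Fk] mpoly_def ..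
    also have "\<dots> = (\<Sum>i<m. \<Sum>S\<in>{S\<in>Fk m k. i \<in> S}. fact k * (b i * ?B S) * ?mono (S - {i}) z)"
    proof (rule sum.cong[OF refl])
      fix i assume i: "i \<in> {..<m}"
      have "b i * (\<Sum>S\<in>Fk m k. fact k * ?B S * of_nat (ind S i) *
           (\<Prod>l<m. z l ^ (if l = i then ind S l - 1 else ind S l)))
          = (\<Sum>S\<in>Fk m k. if i \<in> S then fact k * (b i * ?B S) * ?mono (S - {i}) z else 0)"
        unfolding sum_distrib_left
      proof (rule sum.cong[OF refl])
        fix S assume S: "S \<in> Fk m k"
        hence Sm: "S \<subseteq> {..<m}" by (simp add: Fk_def)
        have "(\<Prod>l<m. z l ^ (if l = i then ind S l - 1 else ind S l)) = (\<Prod>l<m. z l ^ ind (S - {i}) l)"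
          by (intro prod.cong) (auto simp: ind_def)
        also have "\<dots> = ?mono (S - {i}) z" using Sm by (intro mono_ind) auto
        finally show "b i * (fact k * ?B S * of_nat (ind S i) * (\<Prod>l<m. z l ^ (if l = i then ind S l - 1 else ind S l)))
          = (if i \<in> S then fact k * (b i * ?B S) * ?mono (S - {i}) z else 0)"
          by (auto simp: ind_def)
      qed
      also have "\<dots> = (\<Sum>S\<in>{S\<in>Fk m k. i \<in> S}. fact k * (b i * ?B S) * ?mono (S - {i}) z)"
        by (rule sum.inter_filter[OF finite_Fk, symmetric])
      finally show "b i * (\<Sum>S\<in>Fk m k. fact k * ?B S * of_nat (ind S i) *
           (\<Prod>l<m. z l ^ (if l = i then ind S l - 1 else ind S l)))
         = (\<Sum>S\<in>{S\<in>Fk m k. i \<in> S}. fact k * (b i * ?B S) * ?mono (S - {i}) z)" .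
    qed
    also have "\<dots> = (\<Sum>i<m. \<Sum>S\<in>{S\<in>Fk m (Suc k). i \<notin> S}. fact k * ?B S * ?mono S z)"
    proof (rule sum.cong[OF refl])
      fix i assume i: "i \<in> {..<m}"
      have bij: "bij_betw (insert i) {S\<in>Fk m (Suc k). i \<notin> S} {S\<in>Fk m k. i \<in> S}"
      proof (rule bij_betw_byWitness[where f'="\<lambda>S. S - {i}"])
        show "\<forall>a\<in>{S \<in> Fk m (Suc k). i \<notin> S}. insert i a - {i} = a" by auto
        show "\<forall>a'\<in>{S \<in> Fk m k. i \<in> S}. insert i (a' - {i}) = a'" by auto
        show "insert i ` {S \<in> Fk m (Suc k). i \<notin> S} \<subseteq> {S \<in> Fk m k. i \<in> S}"
        proof safe
          fix S assume S: "S \<in> Fk m (Suc k)" "i \<notin> S"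
          hence "S \<subseteq> {..<m}" "card S = m - Suc k" by (auto simp: Fk_def)
          moreover have "finite S" using \<open>S \<subseteq> {..<m}\<close> finite_subset by blast
          ultimately show "insert i S \<in> Fk m k" using S(2) i km by (auto simp: Fk_def)
        qed
        show "(\<lambda>S. S - {i}) ` {S \<in> Fk m k. i \<in> S} \<subseteq> {S \<in> Fk m (Suc k). i \<notin> S}"
        proof safe
          fix S assume S: "S \<in> Fk m k" "i \<in> S"
          hence "S \<subseteq> {..<m}" "card S = m - k" by (auto simp: Fk_def)
          moreover have "finite S" using \<open>S \<subseteq> {..<m}\<close> finite_subset by blast
          ultimately show "S - {i} \<in> Fk m (Suc k)" using S(2) i km by (auto simp: Fk_def)
        qed
      qed
      have "(\<Sum>S\<in>{S\<in>Fk m k. i \<in> S}. fact k * (b i * ?B S) * ?mono (S - {i}) z)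
          = (\<Sum>S\<in>{S\<in>Fk m (Suc k). i \<notin> S}. fact k * (b i * ?B (insert i S)) * ?mono (insert i S - {i}) z)"
        by (rule sum.reindex_bij_betw[OF bij, symmetric])
      also have "\<dots> = (\<Sum>S\<in>{S\<in>Fk m (Suc k). i \<notin> S}. fact k * ?B S * ?mono S z)"
      proof (rule sum.cong[OF refl])
        fix S assume S: "S \<in> {S\<in>Fk m (Suc k). i \<notin> S}"
        have e1: "insert i S - {i} = S" using S by auto
        have "?B S = b i * (\<Prod>l\<in>{..<m}-S-{i}. b l)"
          using S i by (subst prod.remove[where x=i]) auto
        also have "{..<m}-S-{i} = {..<m} - insert i S" by auto
        finally show "fact k * (b i * ?B (insert i S)) * ?mono (insert i S - {i}) z = fact k * ?B S * ?mono S z"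
          unfolding e1 by simp
      qed
      finally show "(\<Sum>S\<in>{S\<in>Fk m k. i \<in> S}. fact k * (b i * ?B S) * ?mono (S - {i}) z)
          = (\<Sum>S\<in>{S\<in>Fk m (Suc k). i \<notin> S}. fact k * ?B S * ?mono S z)" by simp
    qed
    also have "\<dots> = (\<Sum>S\<in>Fk m (Suc k). \<Sum>i\<in>{i\<in>{..<m}. i \<notin> S}. fact k * ?B S * ?mono S z)"
      by (rule sum.swap_restrict) auto
    also have "\<dots> = (\<Sum>S\<in>Fk m (Suc k). fact (Suc k) * ?B S * (\<Prod>l<m. z l ^ ind S l))"
    proof (rule sum.cong[OF refl])
      fix S assume S: "S \<in> Fk m (Suc k)"
      hence Sm: "S \<subseteq> {..<m}" and cS: "card S = m - Suc k" by (auto simp: Fk_def)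
      have "{i\<in>{..<m}. i \<notin> S} = {..<m} - S" by auto
      hence "card {i\<in>{..<m}. i \<notin> S} = Suc k"
        using Sm cS Suc.prems by (simp add: card_Diff_subset finite_subset)
      thus "(\<Sum>i\<in>{i\<in>{..<m}. i \<notin> S}. fact k * ?B S * ?mono S z) = fact (Suc k) * ?B S * (\<Prod>l<m. z l ^ ind S l)"
        using mono_ind[OF Sm, of z] by simp
    qed
    finally show "hk m b (Suc k) z = mpoly (Fk m (Suc k)) (\<lambda>S. fact (Suc k) * ?B S) ind m z"
      unfolding mpoly_def .
  qed
qed

lemma mpoly_mult:
  assumes "finite F" "finite G"
  shows "mpoly F c e m z * mpoly G d f m z = mpoly (F \<times> G) (\<lambda>(a,b). c a * d b) (\<lambda>(a,b) i. e a i + f b i) m z"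
  unfolding mpoly_def sum_product
  by (subst sum.cartesian_product) (auto intro!: sum.cong simp: power_add prod.distrib mult_ac)

lemma det_diag_minus:
  assumes M: "M \<in> carrier_mat m m"
  shows "det (mat_diag m z - M) = mpoly (Pow {..<m}) (\<lambda>A. detI (\<lambda>i j. - M $$ (i,j)) A) (\<lambda>A. ind ({..<m} - A)) m z"
proof -
  have "det (mat_diag m z - M) = detI (\<lambda>i j. (if i = j then z i else 0) + (- M $$ (i,j))) {0..<m}"
    by (subst det_detI[of _ m]) (use M in \<open>auto intro!: detI_cong simp: mat_diag_def\<close>)
  also have "\<dots> = (\<Sum>A\<in>Pow {0..<m}. (\<Prod>i\<in>{0..<m}-A. z i) * detI (\<lambda>i j. - M $$ (i,j)) A)"
    by (rule detI_expand) simp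
  also have "\<dots> = mpoly (Pow {..<m}) (\<lambda>A. detI (\<lambda>i j. - M $$ (i,j)) A) (\<lambda>A. ind ({..<m} - A)) m z"
    unfolding mpoly_def atLeast0LessThan
    by (rule sum.cong[OF refl]) (subst mono_ind, auto)
  finally show ?thesis .
qed

lemma term_val:
  fixes x y :: real
  assumes S: "S \<subseteq> {..<m}" and A: "A \<subseteq> {..<m}" and x: "x = 2 * y"
  shows "(\<Prod>i<m. of_nat (ind S i + ind ({..<m} - A) i) * y ^ (ind S i + ind ({..<m} - A) i - 1))
       = (if A \<subseteq> S then x ^ card (S - A) else 0)"
proof (cases "A \<subseteq> S")
  case True
  have "(\<Prod>i<m. of_nat (ind S i + ind ({..<m} - A) i) * y ^ (ind S i + ind ({..<m} - A) i - 1))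
      = (\<Prod>i<m. if i \<in> S - A then x else 1)"
    using True S A x by (intro prod.cong) (auto simp: ind_def)
  also have "\<dots> = (\<Prod>i\<in>S-A. x)"
    by (rule prod.mono_neutral_cong_right) (use S in auto)
  finally show ?thesis using True by simp
next
  case False
  then obtain i where i: "i \<in> A" "i \<notin> S" by blast
  hence "i < m" using A by auto
  hence "(\<Prod>i<m. of_nat (ind S i + ind ({..<m} - A) i) * y ^ (ind S i + ind ({..<m} - A) i - 1)) = 0"
    using i by (intro prod_zero) (auto simp: ind_def intro!: bexI[of _ i])
  thus ?thesis using False by simp
qed

lemma mixd_formula:
  assumes M: "M \<in> carrier_mat m m" and k: "k \<le> m"
  shows "mixd m (\<lambda>z. hk m b k z * det (mat_diag m z - M)) (\<lambda>i. x / 2)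
       = (\<Sum>S\<in>Fk m k. fact k * (\<Prod>i\<in>{..<m}-S. b i) * detI (\<lambda>i j. (if i = j then x else 0) + - M $$ (i,j)) S)"
proof -
  let ?c1 = "\<lambda>S. fact k * (\<Prod>i\<in>{..<m}-S. b i)"
  let ?c2 = "\<lambda>A. detI (\<lambda>i j. - M $$ (i,j)) A"
  have fP: "finite (Pow {..<m::nat})" by simp
  have f: "(\<lambda>z. hk m b k z * det (mat_diag m z - M)) =
     mpoly (Fk m k \<times> Pow {..<m}) (\<lambda>(a,b). ?c1 a * ?c2 b) (\<lambda>(a,b) i. ind a i + ind ({..<m} - b) i) m"
    by (rule ext, unfold hk_mpoly[OF k] det_diag_minus[OF M], rule mpoly_mult[OF finite_Fk fP])
  have "mixd m (\<lambda>z. hk m b k z * det (mat_diag m z - M)) (\<lambda>i. x / 2)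
     = (\<Sum>p\<in>Fk m k \<times> Pow {..<m}. (\<lambda>(a,b). ?c1 a * ?c2 b) p *
          (\<Prod>i<m. of_nat ((\<lambda>(a,b) i. ind a i + ind ({..<m} - b) i) p i) * (x/2) ^ ((\<lambda>(a,b) i. ind a i + ind ({..<m} - b) i) p i - 1)))"
    unfolding f by (rule mixd_mpoly_const) (simp add: fP)
  also have "\<dots> = (\<Sum>S\<in>Fk m k. \<Sum>A\<in>Pow {..<m}. ?c1 S * ?c2 A *
          (\<Prod>i<m. of_nat (ind S i + ind ({..<m} - A) i) * (x/2) ^ (ind S i + ind ({..<m} - A) i - 1)))"
    by (subst sum.cartesian_product) (rule sum.cong, auto)
  also have "\<dots> = (\<Sum>S\<in>Fk m k. \<Sum>A\<in>Pow {..<m}. if A \<subseteq> S then ?c1 S * (x ^ card (S - A) * ?c2 A) else 0)"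
  proof (rule sum.cong[OF refl], rule sum.cong[OF refl])
    fix S A assume S: "S \<in> Fk m k" and A: "A \<in> Pow {..<m}"
    have Sm: "S \<subseteq> {..<m}" using S by (simp add: Fk_def)
    show "?c1 S * ?c2 A * (\<Prod>i<m. of_nat (ind S i + ind ({..<m} - A) i) * (x/2) ^ (ind S i + ind ({..<m} - A) i - 1))
        = (if A \<subseteq> S then ?c1 S * (x ^ card (S - A) * ?c2 A) else 0)"
      using term_val[OF Sm, of A x "x/2"] A by simp
  qed
  also have "\<dots> = (\<Sum>S\<in>Fk m k. ?c1 S * detI (\<lambda>i j. (if i = j then x else 0) + - M $$ (i,j)) S)"
  proof (rule sum.cong[OF refl])
    fix S assume S: "S \<in> Fk m k"
    have Sm: "S \<subseteq> {..<m}" using S by (simp add: Fk_def)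
    have fS: "finite S" using Sm finite_subset by blast
    have "(\<Sum>A\<in>Pow {..<m}. if A \<subseteq> S then ?c1 S * (x ^ card (S - A) * ?c2 A) else 0)
        = (\<Sum>A\<in>{A\<in>Pow {..<m}. A \<subseteq> S}. ?c1 S * (x ^ card (S - A) * ?c2 A))"
      by (rule sum.inter_filter[OF fP, symmetric])
    also have "{A\<in>Pow {..<m}. A \<subseteq> S} = Pow S" using Sm by auto
    also have "(\<Sum>A\<in>Pow S. ?c1 S * (x ^ card (S - A) * ?c2 A)) = ?c1 S * (\<Sum>A\<in>Pow S. (\<Prod>i\<in>S-A. x) * ?c2 A)"
      by (simp add: sum_distrib_left)
    also have "(\<Sum>A\<in>Pow S. (\<Prod>i\<in>S-A. x) * ?c2 A) = detI (\<lambda>i j. (if i = j then x else 0) + - M $$ (i,j)) S"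
      by (rule detI_expand[OF fS, symmetric])
    finally show "(\<Sum>A\<in>Pow {..<m}. if A \<subseteq> S then ?c1 S * (x ^ card (S - A) * ?c2 A) else 0)
        = ?c1 S * detI (\<lambda>i j. (if i = j then x else 0) + - M $$ (i,j)) S" .
  qed
  finally show ?thesis by (simp add: mult.assoc)
qed

lemma mat_minus_plus_cancel:
  fixes P :: "real mat"
  assumes "P \<in> carrier_mat r c" "Z \<in> carrier_mat r c"
  shows "P - Z + Z = P"
  by (rule eq_matI) (use assms in auto)

lemma mat_minus_uminus:
  fixes P :: "real mat"
  assumes "P \<in> carrier_mat r c" "Z \<in> carrier_mat r c"
  shows "P - (- Z) = P + Z"
  by (rule eq_matI) (use assms in auto)

lemma mat_plus_minus_cancel:
  fixes P :: "real mat"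
  assumes "P \<in> carrier_mat r c" "Z \<in> carrier_mat r c"
  shows "Z + (P - Z) = P"
  by (rule eq_matI) (use assms in auto)

lemma schur_lower:
  fixes P :: "real mat"
  assumes P: "P \<in> carrier_mat a a" and Q: "Q \<in> carrier_mat a b" and R: "R \<in> carrier_mat b a"
    and S: "S \<in> carrier_mat b b" and Si: "Si \<in> carrier_mat b b" and SSi: "Si * S = 1\<^sub>m b"
  shows "det (four_block_mat P Q R S) = det (P - Q * Si * R) * det S"
proof -
  let ?L = "four_block_mat (1\<^sub>m a) (Q * Si) (0\<^sub>m b a) (1\<^sub>m b)"
  let ?R = "four_block_mat (P - Q * Si * R) (0\<^sub>m a b) R S"
  have QSi: "Q * Si \<in> carrier_mat a b" using Q Si by simp
  have X: "P - Q * Si * R \<in> carrier_mat a a"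
    by (rule minus_carrier_mat, rule mult_carrier_mat[OF mult_carrier_mat[OF Q Si] R])
  have "?L * ?R = four_block_mat (1\<^sub>m a * (P - Q * Si * R) + Q * Si * R) (1\<^sub>m a * 0\<^sub>m a b + Q * Si * S)
      (0\<^sub>m b a * (P - Q * Si * R) + 1\<^sub>m b * R) (0\<^sub>m b a * 0\<^sub>m a b + 1\<^sub>m b * S)"
    by (rule mult_four_block_mat[OF one_carrier_mat QSi zero_carrier_mat one_carrier_mat X zero_carrier_mat R S])
  also have "1\<^sub>m a * (P - Q * Si * R) + Q * Si * R = P"
  proof -
    have "1\<^sub>m a * (P - Q * Si * R) = P - Q * Si * R" by (rule left_mult_one_mat[OF X])
    thus ?thesis using mat_minus_plus_cancel[OF P mult_carrier_mat[OF mult_carrier_mat[OF Q Si] R]] by simp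
  qed
  also have "1\<^sub>m a * 0\<^sub>m a b + Q * Si * S = Q"
  proof -
    have "Q * Si * S = Q * (Si * S)" using Q Si S by simp
    thus ?thesis using Q SSi by simp
  qed
  also have "0\<^sub>m b a * (P - Q * Si * R) + 1\<^sub>m b * R = R" using left_mult_zero_mat[OF X, of b] R by simp
  also have "0\<^sub>m b a * 0\<^sub>m a b + 1\<^sub>m b * S = S" using S by simp
  finally have eq: "?L * ?R = four_block_mat P Q R S" .
  have "det (?L * ?R) = det ?L * det ?R"
    by (rule det_mult[of _ "a+b"]) (use QSi X R S in auto)
  also have "det ?L = 1"
    by (subst det_four_block_mat_lower_left_zero[of _ a _ b]) (use QSi in auto)
  also have "det ?R = det (P - Q * Si * R) * det S"
    by (rule det_four_block_mat_upper_right_zero[of _ a _ b]) (use X R S in auto)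
  finally show ?thesis using eq by simp
qed

lemma schur_upper:
  fixes P :: "real mat"
  assumes P: "P \<in> carrier_mat a a" and Q: "Q \<in> carrier_mat a b" and R: "R \<in> carrier_mat b a"
    and S: "S \<in> carrier_mat b b" and Pv: "Pv \<in> carrier_mat a a" and PPv: "P * Pv = 1\<^sub>m a"
  shows "det (four_block_mat P Q R S) = det P * det (S - R * Pv * Q)"
proof -
  let ?L = "four_block_mat P (0\<^sub>m a b) R (1\<^sub>m b)"
  let ?R = "four_block_mat (1\<^sub>m a) (Pv * Q) (0\<^sub>m b a) (S - R * Pv * Q)"
  have PvQ: "Pv * Q \<in> carrier_mat a b" using Q Pv by simp
  have X: "S - R * Pv * Q \<in> carrier_mat b b"
    by (rule minus_carrier_mat, rule mult_carrier_mat[OF mult_carrier_mat[OF R Pv] Q])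
  have "?L * ?R = four_block_mat (P * 1\<^sub>m a + 0\<^sub>m a b * 0\<^sub>m b a) (P * (Pv * Q) + 0\<^sub>m a b * (S - R * Pv * Q))
      (R * 1\<^sub>m a + 1\<^sub>m b * 0\<^sub>m b a) (R * (Pv * Q) + 1\<^sub>m b * (S - R * Pv * Q))"
    by (rule mult_four_block_mat[OF P zero_carrier_mat R one_carrier_mat one_carrier_mat PvQ zero_carrier_mat X])
  also have "P * 1\<^sub>m a + 0\<^sub>m a b * 0\<^sub>m b a = P" using P by simp
  also have "P * (Pv * Q) + 0\<^sub>m a b * (S - R * Pv * Q) = Q"
  proof -
    have "P * (Pv * Q) = (P * Pv) * Q" using P Pv Q by simp
    thus ?thesis using Q PPv left_mult_zero_mat[OF X, of a] by simp
  qed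
  also have "R * 1\<^sub>m a + 1\<^sub>m b * 0\<^sub>m b a = R" using R by simp
  also have "R * (Pv * Q) + 1\<^sub>m b * (S - R * Pv * Q) = S"
  proof -
    have "R * (Pv * Q) = R * Pv * Q" using R Pv Q by simp
    moreover have "1\<^sub>m b * (S - R * Pv * Q) = S - R * Pv * Q" by (rule left_mult_one_mat[OF X])
    ultimately show ?thesis using mat_plus_minus_cancel[OF S mult_carrier_mat[OF mult_carrier_mat[OF R Pv] Q]] by simp
  qed
  finally have eq: "?L * ?R = four_block_mat P Q R S" .
  have "det (?L * ?R) = det ?L * det ?R"
    by (rule det_mult[of _ "a+b"]) (use PvQ X R P in auto)
  also have "det ?L = det P"
    by (subst det_four_block_mat_upper_right_zero[of _ a _ b]) (use P R in auto)
  also have "det ?R = det (S - R * Pv * Q)"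
    by (subst det_four_block_mat_lower_left_zero[of _ a _ b]) (use PvQ X in auto)
  finally show ?thesis using eq by simp
qed

lemma sylvester:
  fixes X :: "real mat"
  assumes X: "X \<in> carrier_mat a b" and Y: "Y \<in> carrier_mat b a"
  shows "det (1\<^sub>m a + X * Y) = det (1\<^sub>m b + Y * X)"
proof -
  let ?K = "four_block_mat (1\<^sub>m a) X (- Y) (1\<^sub>m b)"
  have "det ?K = det (1\<^sub>m a - X * 1\<^sub>m b * (- Y)) * det (1\<^sub>m b)"
    by (rule schur_lower) (use X Y in auto)
  also have "1\<^sub>m a - X * 1\<^sub>m b * (- Y) = 1\<^sub>m a + X * Y"
  proof -
    have "X * 1\<^sub>m b * (- Y) = - (X * Y)" using X Y by simp
    thus ?thesis using mat_minus_uminus[of "1\<^sub>m a" a a "X * Y"] X Y by simp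
  qed
  finally have 1: "det ?K = det (1\<^sub>m a + X * Y)" by simp
  have "det ?K = det (1\<^sub>m a) * det (1\<^sub>m b - (- Y) * 1\<^sub>m a * X)"
    by (rule schur_upper) (use X Y in auto)
  also have "1\<^sub>m b - (- Y) * 1\<^sub>m a * X = 1\<^sub>m b + Y * X"
  proof -
    have "(- Y) * 1\<^sub>m a * X = - (Y * X)" using X Y by simp
    thus ?thesis using mat_minus_uminus[of "1\<^sub>m b" b b "Y * X"] X Y by simp
  qed
  finally show ?thesis using 1 by simp
qed

lemma pinv_unique_aux:
  fixes M :: "real mat"
  assumes M: "M \<in> carrier_mat r c" and X: "X \<in> carrier_mat c r" and Y: "Y \<in> carrier_mat c r"
    and x1: "M * X * M = M" and x2: "X * M * X = X" and x3: "(M * X)\<^sup>T = M * X" and x4: "(X * M)\<^sup>T = X * M"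
    and y1: "M * Y * M = M" and y2: "Y * M * Y = Y" and y3: "(M * Y)\<^sup>T = M * Y" and y4: "(Y * M)\<^sup>T = Y * M"
  shows "Y = X"
proof -
  have MT: "M\<^sup>T \<in> carrier_mat c r" using M by simp
  have XT: "X\<^sup>T \<in> carrier_mat r c" using X by simp
  have YT: "Y\<^sup>T \<in> carrier_mat r c" using Y by simp
  have MX: "M * X \<in> carrier_mat r r" using M X by simp
  have MY: "M * Y \<in> carrier_mat r r" using M Y by simp
  have XM: "X * M \<in> carrier_mat c c" using M X by simp
  have YM: "Y * M \<in> carrier_mat c c" using M Y by simp
  have tMX: "(M * X)\<^sup>T = X\<^sup>T * M\<^sup>T" by (rule transpose_mult[OF M X])
  have tMY: "(M * Y)\<^sup>T = Y\<^sup>T * M\<^sup>T" by (rule transpose_mult[OF M Y])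
  have tXM: "(X * M)\<^sup>T = M\<^sup>T * X\<^sup>T" by (rule transpose_mult[OF X M])
  have tYM: "(Y * M)\<^sup>T = M\<^sup>T * Y\<^sup>T" by (rule transpose_mult[OF Y M])
  have tM1: "M\<^sup>T = M\<^sup>T * Y\<^sup>T * M\<^sup>T"
  proof -
    have "M\<^sup>T = (M * Y * M)\<^sup>T" using y1 by simp
    also have "\<dots> = M\<^sup>T * (M * Y)\<^sup>T" by (rule transpose_mult[OF mult_carrier_mat[OF M Y] M])
    also have "\<dots> = M\<^sup>T * (Y\<^sup>T * M\<^sup>T)" by (simp add: tMY)
    finally show ?thesis using MT YT by simp
  qed
  have tM2: "M\<^sup>T = M\<^sup>T * X\<^sup>T * M\<^sup>T"
  proof -
    have "M\<^sup>T = (M * X * M)\<^sup>T" using x1 by simp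
    also have "\<dots> = M\<^sup>T * (M * X)\<^sup>T" by (rule transpose_mult[OF mult_carrier_mat[OF M X] M])
    also have "\<dots> = M\<^sup>T * (X\<^sup>T * M\<^sup>T)" by (simp add: tMX)
    finally show ?thesis using MT XT by simp
  qed
  have "X = X * (M * X)" using x2 M X by simp
  also have "\<dots> = X * (X\<^sup>T * M\<^sup>T)" using x3 tMX by simp
  also have "\<dots> = X * (X\<^sup>T * (M\<^sup>T * Y\<^sup>T * M\<^sup>T))" using tM1 by simp
  also have "\<dots> = X * ((X\<^sup>T * M\<^sup>T) * (Y\<^sup>T * M\<^sup>T))"
    using assoc_mult_mat[OF MT YT MT] assoc_mult_mat[OF XT MT mult_carrier_mat[OF YT MT]] by simp
  also have "\<dots> = X * ((M * X) * (M * Y))" using x3 y3 tMX tMY by simp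
  also have "\<dots> = (X * M * X) * (M * Y)" by (simp only: assoc_mult_mat[OF X M X] assoc_mult_mat[OF X MX MY])
  also have "\<dots> = X * (M * Y)" using x2 by simp
  finally have xe: "X = X * (M * Y)" .
  have "Y = (Y * M) * Y" using y2 M Y by simp
  also have "\<dots> = (M\<^sup>T * Y\<^sup>T) * Y" using y4 tYM by simp
  also have "\<dots> = ((M\<^sup>T * X\<^sup>T * M\<^sup>T) * Y\<^sup>T) * Y" using tM2 by simp
  also have "\<dots> = ((M\<^sup>T * X\<^sup>T) * (M\<^sup>T * Y\<^sup>T)) * Y"
    using assoc_mult_mat[OF mult_carrier_mat[OF MT XT] MT YT] by simp
  also have "\<dots> = ((X * M) * (Y * M)) * Y" using x4 y4 tXM tYM by simp
  also have "\<dots> = (X * M) * ((Y * M) * Y)" by (rule assoc_mult_mat[OF XM YM Y])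
  also have "\<dots> = (X * M) * (Y * (M * Y))" by (simp only: assoc_mult_mat[OF Y M Y])
  also have "\<dots> = X * (M * (Y * (M * Y)))" by (rule assoc_mult_mat[OF X M mult_carrier_mat[OF Y MY]])
  also have "M * (Y * (M * Y)) = (M * Y) * (M * Y)" by (rule assoc_mult_mat[OF M Y MY, symmetric])
  also have "\<dots> = M * Y * M * Y" by (simp only: assoc_mult_mat[OF MY M Y])
  also have "M * Y * M * Y = M * Y" using y1 by simp
  finally have ye: "Y = X * (M * Y)" .
  show ?thesis using xe ye by simp
qed

lemma pinv_eq:
  fixes M :: "real mat"
  assumes M: "M \<in> carrier_mat r c" and X: "X \<in> carrier_mat c r"
    and x1: "M * X * M = M" and x2: "X * M * X = X" and x3: "(M * X)\<^sup>T = M * X" and x4: "(X * M)\<^sup>T = X * M"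
  shows "pinv M = X"
  unfolding pinv_def
proof (rule the_equality)
  show "X \<in> carrier_mat (dim_col M) (dim_row M) \<and> M * X * M = M \<and> X * M * X = X \<and> (M * X)\<^sup>T = M * X \<and> (X * M)\<^sup>T = X * M"
    using M X x1 x2 x3 x4 by simp
  fix Y assume "Y \<in> carrier_mat (dim_col M) (dim_row M) \<and> M * Y * M = M \<and> Y * M * Y = Y \<and> (M * Y)\<^sup>T = M * Y \<and> (Y * M)\<^sup>T = Y * M"
  thus "Y = X" using pinv_unique_aux[OF M X, of Y] x1 x2 x3 x4 M by auto
qed

lemma assoc_dim:
  fixes A :: "'a :: semiring_0 mat"
  assumes "dim_col A = dim_row B" "dim_col B = dim_row C"
  shows "A * B * C = A * (B * C)"
  by (rule assoc_mult_mat[of A "dim_row A" "dim_col A" B "dim_col B" C "dim_col C"]) (use assms in auto)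

lemma EEt_zero:
  fixes E :: "real mat"
  assumes E: "E \<in> carrier_mat r p" and z: "E * E\<^sup>T = 0\<^sub>m r r"
  shows "E = 0\<^sub>m r p"
proof (rule eq_matI)
  fix i j assume i: "i < dim_row (0\<^sub>m r p)" and j: "j < dim_col (0\<^sub>m r p)"
  have "(E * E\<^sup>T) $$ (i,i) = 0" using z i by simp
  hence "(\<Sum>l\<in>{0..<p}. E $$ (i,l) * E $$ (i,l)) = 0"
    using E i by (simp add: scalar_prod_def)
  hence "\<forall>l\<in>{0..<p}. E $$ (i,l) * E $$ (i,l) = 0"
    by (subst sum_nonneg_eq_0_iff[symmetric]) auto
  thus "E $$ (i,j) = 0\<^sub>m r p $$ (i,j)" using i j by auto
qed (use E in auto)

lemma diag_inv1:
  assumes "\<forall>i<m. b i \<noteq> (0::real)"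
  shows "mat_diag m b * mat_diag m (\<lambda>i. 1 / b i) = 1\<^sub>m m"
proof -
  have "mat_diag m b * mat_diag m (\<lambda>i. 1 / b i) = Matrix.mat m m (\<lambda>(i,j). b i * mat_diag m (\<lambda>i. 1 / b i) $$ (i,j))"
    by (rule mat_diag_mult_left) simp
  thus ?thesis using assms by (auto intro!: eq_matI simp: mat_diag_def)
qed

lemma diag_inv2:
  assumes "\<forall>i<m. b i \<noteq> (0::real)"
  shows "mat_diag m (\<lambda>i. 1 / b i) * mat_diag m b = 1\<^sub>m m"
proof -
  have "mat_diag m (\<lambda>i. 1 / b i) * mat_diag m b = Matrix.mat m m (\<lambda>(i,j). 1 / b i * mat_diag m b $$ (i,j))"
    by (rule mat_diag_mult_left) simp
  thus ?thesis using assms by (auto intro!: eq_matI simp: mat_diag_def)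
qed

lemma diag_transpose[simp]: "(mat_diag m f)\<^sup>T = mat_diag m f"
  by (auto intro!: eq_matI simp: mat_diag_def)

locale ctx5 =
  fixes A B U :: "real mat" and n d dB m :: nat and b :: "nat \<Rightarrow> real"
  assumes A: "A \<in> carrier_mat n d"
    and B: "B \<in> carrier_mat n dB"
    and U: "U \<in> carrier_mat n m"
    and UU: "U\<^sup>T * U = 1\<^sub>m m"
    and BB: "B * B\<^sup>T = U * mat_diag m b * U\<^sup>T"
    and bpos: "\<forall>i<m. b i > 0"
begin

definition "C = U\<^sup>T * B"
definition "D = mat_diag m b"
definition "Di = mat_diag m (\<lambda>i. 1 / b i)"
definition "G = U\<^sup>T * A"

lemma carr:
  "C \<in> carrier_mat m dB" "D \<in> carrier_mat m m" "Di \<in> carrier_mat m m" "G \<in> carrier_mat m d"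
  "U\<^sup>T \<in> carrier_mat m n" "B\<^sup>T \<in> carrier_mat dB n" "A\<^sup>T \<in> carrier_mat d n"
  "C\<^sup>T \<in> carrier_mat dB m" "G\<^sup>T \<in> carrier_mat d m"
  "U * U\<^sup>T \<in> carrier_mat n n" "U * C \<in> carrier_mat n dB" "U * D \<in> carrier_mat n m"
  "U * G \<in> carrier_mat n d"
  using A B U unfolding C_def D_def Di_def G_def by auto

lemma cC: "C \<in> carrier_mat m dB" and cD: "D \<in> carrier_mat m m" and cDi: "Di \<in> carrier_mat m m"
  and cG: "G \<in> carrier_mat m d" and cUt: "U\<^sup>T \<in> carrier_mat m n" and cBt: "B\<^sup>T \<in> carrier_mat dB n"
  and cAt: "A\<^sup>T \<in> carrier_mat d n" and cCt: "C\<^sup>T \<in> carrier_mat dB m" and cGt: "G\<^sup>T \<in> carrier_mat d m"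
  using carr by auto

lemmas cs = carr A B U

lemma dims[simp]:
  "dim_row A = n" "dim_col A = d" "dim_row B = n" "dim_col B = dB" "dim_row U = n" "dim_col U = m"
  "dim_row C = m" "dim_col C = dB" "dim_row D = m" "dim_col D = m" "dim_row Di = m" "dim_col Di = m"
  "dim_row G = m" "dim_col G = d"
  using cs by auto

lemma DDi: "D * Di = 1\<^sub>m m" "Di * D = 1\<^sub>m m"
  unfolding D_def Di_def by (rule diag_inv1 diag_inv2; use bpos in auto)+

lemma Dt[simp]: "D\<^sup>T = D" "Di\<^sup>T = Di" unfolding D_def Di_def by simp_all

lemma BB': "B * B\<^sup>T = U * D * U\<^sup>T" using BB unfolding D_def .

lemma B_UC: "B = U * C"
proof -
  let ?E = "B - U * C"
  have UC: "U * C \<in> carrier_mat n dB" by (rule mult_carrier_mat[OF U cC])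
  have UCt: "(U * C)\<^sup>T \<in> carrier_mat dB n" using UC by simp
  have E: "?E \<in> carrier_mat n dB" by (rule minus_carrier_mat[OF UC])
  have Ct: "C\<^sup>T = B\<^sup>T * U" unfolding C_def by (simp only: transpose_mult[OF cUt B] transpose_transpose)
  have DUt: "D * U\<^sup>T \<in> carrier_mat m n" by (rule mult_carrier_mat[OF cD cUt])
  have BB2: "B * B\<^sup>T \<in> carrier_mat n n" by (rule mult_carrier_mat[OF B cBt])
  have EBt: "?E * B\<^sup>T = 0\<^sub>m n n"
  proof -
    have "?E * B\<^sup>T = B * B\<^sup>T - U * C * B\<^sup>T" by (rule minus_mult_distrib_mat[OF B UC cBt])
    also have "U * C * B\<^sup>T = B * B\<^sup>T"
    proof -
      have "U * C * B\<^sup>T = U * (C * B\<^sup>T)" by (rule assoc_mult_mat[OF U cC cBt])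
      also have "C * B\<^sup>T = U\<^sup>T * (B * B\<^sup>T)" unfolding C_def by (rule assoc_mult_mat[OF cUt B cBt])
      also have "B * B\<^sup>T = U * (D * U\<^sup>T)" unfolding BB' by (rule assoc_mult_mat[OF U cD cUt])
      also have "U\<^sup>T * (U * (D * U\<^sup>T)) = (U\<^sup>T * U) * (D * U\<^sup>T)" by (rule assoc_mult_mat[OF cUt U DUt, symmetric])
      also have "\<dots> = D * U\<^sup>T" unfolding UU by (rule left_mult_one_mat[OF DUt])
      also have "U * (D * U\<^sup>T) = U * D * U\<^sup>T" by (rule assoc_mult_mat[OF U cD cUt, symmetric])
      finally show ?thesis unfolding BB' .
    qed
    also have "B * B\<^sup>T - B * B\<^sup>T = 0\<^sub>m n n" by (rule eq_matI) (use BB2 in auto)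
    finally show ?thesis .
  qed
  have "?E * ?E\<^sup>T = ?E * (B\<^sup>T - (U * C)\<^sup>T)" by (simp only: transpose_minus[OF B UC])
  also have "\<dots> = ?E * B\<^sup>T - ?E * (U * C)\<^sup>T" by (rule mult_minus_distrib_mat[OF E cBt UCt])
  also have "(U * C)\<^sup>T = (B\<^sup>T * U) * U\<^sup>T" by (simp only: transpose_mult[OF U cC] Ct)
  also have "?E * ((B\<^sup>T * U) * U\<^sup>T) = ((?E * B\<^sup>T) * U) * U\<^sup>T"
    by (simp only: assoc_mult_mat[OF E mult_carrier_mat[OF cBt U] cUt] assoc_mult_mat[OF E cBt U])
  also have "((?E * B\<^sup>T) * U) * U\<^sup>T = 0\<^sub>m n n" unfolding EBt
    by (simp only: left_mult_zero_mat[OF U] left_mult_zero_mat[OF cUt])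
  also have "?E * B\<^sup>T - 0\<^sub>m n n = (0\<^sub>m n n :: real mat)" unfolding EBt by (rule eq_matI) auto
  finally have "?E * ?E\<^sup>T = 0\<^sub>m n n" .
  hence E0: "?E = 0\<^sub>m n dB" by (rule EEt_zero[OF E])
  show ?thesis
  proof (rule eq_matI)
    fix i j assume "i < dim_row (U * C)" "j < dim_col (U * C)"
    hence ij: "i < n" "j < dB" using UC by auto
    have "?E $$ (i,j) = 0" using E0 ij by simp
    thus "B $$ (i,j) = (U * C) $$ (i,j)" using ij B UC by simp
  qed (use UC B in auto)
qed


lemma Ct: "C\<^sup>T = B\<^sup>T * U" unfolding C_def by (simp only: transpose_mult[OF cUt B] transpose_transpose)

lemma CCt: "C * C\<^sup>T = D"
proof -
  have BtU: "B\<^sup>T * U \<in> carrier_mat dB m" by (rule mult_carrier_mat[OF cBt U])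
  have UD: "U * D \<in> carrier_mat n m" by (rule mult_carrier_mat[OF U cD])
  have "C * C\<^sup>T = U\<^sup>T * (B * (B\<^sup>T * U))" by (subst Ct, unfold C_def, rule assoc_mult_mat[OF cUt B BtU])
  also have "B * (B\<^sup>T * U) = U * D * U\<^sup>T * U" unfolding BB'[symmetric] by (rule assoc_mult_mat[OF B cBt U, symmetric])
  also have "\<dots> = U * D" by (simp only: assoc_mult_mat[OF UD cUt U] UU right_mult_one_mat[OF UD])
  also have "U\<^sup>T * (U * D) = D" by (simp only: assoc_mult_mat[OF cUt U cD, symmetric] UU left_mult_one_mat[OF cD])
  finally show ?thesis .
qed

definition "X0 = C\<^sup>T * Di * U\<^sup>T"

lemma cX0: "X0 \<in> carrier_mat dB n" unfolding X0_def by (rule mult_carrier_mat[OF mult_carrier_mat[OF cCt cDi] cUt])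

lemma CX0: "C * X0 = U\<^sup>T"
proof -
  have CtDi: "C\<^sup>T * Di \<in> carrier_mat dB m" by (rule mult_carrier_mat[OF cCt cDi])
  have "C * X0 = (C * (C\<^sup>T * Di)) * U\<^sup>T" unfolding X0_def by (rule assoc_mult_mat[OF cC CtDi cUt, symmetric])
  also have "C * (C\<^sup>T * Di) = 1\<^sub>m m"
    by (simp only: assoc_mult_mat[OF cC cCt cDi, symmetric] CCt DDi)
  finally show ?thesis by (simp only: left_mult_one_mat[OF cUt])
qed

lemma X0U: "X0 * U = C\<^sup>T * Di"
proof -
  have CtDi: "C\<^sup>T * Di \<in> carrier_mat dB m" by (rule mult_carrier_mat[OF cCt cDi])
  show ?thesis unfolding X0_def by (simp only: assoc_mult_mat[OF CtDi cUt U] UU right_mult_one_mat[OF CtDi])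
qed

lemma BX0: "B * X0 = U * U\<^sup>T"
  by (subst B_UC) (simp only: assoc_mult_mat[OF U cC cX0] CX0)

lemma X0B: "X0 * B = C\<^sup>T * Di * C"
  by (subst B_UC) (simp only: assoc_mult_mat[OF cX0 U cC, symmetric] X0U)

lemma pinvB: "pinv B = X0"
proof (rule pinv_eq[OF B cX0])
  have UUt: "U * U\<^sup>T \<in> carrier_mat n n" by (rule mult_carrier_mat[OF U cUt])
  have CtDi: "C\<^sup>T * Di \<in> carrier_mat dB m" by (rule mult_carrier_mat[OF cCt cDi])
  have "U * U\<^sup>T * (U * C) = U * C"
    by (simp only: assoc_mult_mat[OF U cUt mult_carrier_mat[OF U cC]] assoc_mult_mat[OF cUt U cC, symmetric] UU left_mult_one_mat[OF cC])
  thus "B * X0 * B = B" unfolding BX0 by (simp only: B_UC[symmetric])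
  show "X0 * B * X0 = X0" unfolding X0B
    by (simp only: assoc_mult_mat[OF CtDi cC cX0] CX0) (simp only: X0_def)
  show "(B * X0)\<^sup>T = B * X0" unfolding BX0 by (simp only: transpose_mult[OF U cUt] transpose_transpose)
  show "(X0 * B)\<^sup>T = X0 * B" unfolding X0B
    by (simp only: transpose_mult[OF CtDi cC] transpose_mult[OF cCt cDi] transpose_transpose Dt) (rule assoc_mult_mat[OF cCt cDi cC, symmetric])
qed

lemma Aprime: "B * pinv B * A = U * G"
  unfolding pinvB BX0 G_def by (rule assoc_mult_mat[OF U cUt A])

end

lemma sm_sm: "(a::real) \<cdot>\<^sub>m (c \<cdot>\<^sub>m A) = (a * c) \<cdot>\<^sub>m A"
  by (rule eq_matI) auto

lemma sm_minus: assumes "A \<in> carrier_mat r c" "B \<in> carrier_mat r c"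
  shows "(a::real) \<cdot>\<^sub>m (A - B) = a \<cdot>\<^sub>m A - a \<cdot>\<^sub>m B"
  by (rule eq_matI) (use assms in \<open>auto simp: algebra_simps\<close>)

lemma one_sm: "(1::real) \<cdot>\<^sub>m A = A"
  by (rule eq_matI) auto

lemma blockK:
  fixes M CS Wi :: "real mat"
  assumes M: "M \<in> carrier_mat m m" and CS: "CS \<in> carrier_mat m k" and Wi: "Wi \<in> carrier_mat k k"
    and WWi: "Wi * (CS\<^sup>T * CS) = 1\<^sub>m k" and x: "x \<noteq> 0"
  shows "det (CS\<^sup>T * CS) * det (x \<cdot>\<^sub>m 1\<^sub>m m - (1\<^sub>m m - CS * Wi * CS\<^sup>T) * M)
       = x ^ k * det (four_block_mat (x \<cdot>\<^sub>m 1\<^sub>m m - M) CS (- CS\<^sup>T) (0\<^sub>m k k))"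
proof -
  have CSt: "CS\<^sup>T \<in> carrier_mat k m" using CS by simp
  have W: "CS\<^sup>T * CS \<in> carrier_mat k k" by (rule mult_carrier_mat[OF CSt CS])
  have Y: "x \<cdot>\<^sub>m 1\<^sub>m m - M \<in> carrier_mat m m" by (rule minus_carrier_mat[OF M])
  have CSWi: "CS * Wi \<in> carrier_mat m k" by (rule mult_carrier_mat[OF CS Wi])
  have Pm: "CS * Wi * CS\<^sup>T \<in> carrier_mat m m" by (rule mult_carrier_mat[OF CSWi CSt])
  have CStY: "CS\<^sup>T * (x \<cdot>\<^sub>m 1\<^sub>m m - M) \<in> carrier_mat k m" by (rule mult_carrier_mat[OF CSt Y])
  have sCSt: "(1/x) \<cdot>\<^sub>m CS\<^sup>T \<in> carrier_mat k m" using CSt by simp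
  have mCSt: "- CS\<^sup>T \<in> carrier_mat k m" using CSt by (rule uminus_carrier_mat)
  let ?Y = "x \<cdot>\<^sub>m 1\<^sub>m m - M"
  let ?K = "four_block_mat ?Y CS (- CS\<^sup>T) (0\<^sub>m k k)"
  let ?L = "four_block_mat (1\<^sub>m m) (0\<^sub>m m k) ((1/x) \<cdot>\<^sub>m CS\<^sup>T) (1\<^sub>m k)"
  let ?BL = "(1/x) \<cdot>\<^sub>m (CS\<^sup>T * ?Y) - CS\<^sup>T"
  have BL: "?BL \<in> carrier_mat k m" by (rule minus_carrier_mat[OF CSt])
  have "?L * ?K = four_block_mat (1\<^sub>m m * ?Y + 0\<^sub>m m k * - CS\<^sup>T) (1\<^sub>m m * CS + 0\<^sub>m m k * 0\<^sub>m k k)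
      ((1/x) \<cdot>\<^sub>m CS\<^sup>T * ?Y + 1\<^sub>m k * - CS\<^sup>T) ((1/x) \<cdot>\<^sub>m CS\<^sup>T * CS + 1\<^sub>m k * 0\<^sub>m k k)"
    by (rule mult_four_block_mat[OF one_carrier_mat zero_carrier_mat sCSt one_carrier_mat Y CS mCSt zero_carrier_mat])
  also have "1\<^sub>m m * ?Y + 0\<^sub>m m k * - CS\<^sup>T = ?Y"
    by (simp only: left_mult_one_mat[OF Y] left_mult_zero_mat[OF mCSt] right_add_zero_mat[OF Y])
  also have "1\<^sub>m m * CS + 0\<^sub>m m k * 0\<^sub>m k k = CS"
    by (simp only: left_mult_one_mat[OF CS] left_mult_zero_mat[OF zero_carrier_mat] right_add_zero_mat[OF CS])
  also have "(1/x) \<cdot>\<^sub>m CS\<^sup>T * ?Y + 1\<^sub>m k * - CS\<^sup>T = ?BL"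
    by (simp only: mult_smult_assoc_mat[OF CSt Y] left_mult_one_mat[OF mCSt] minus_add_uminus_mat[OF smult_carrier_mat[OF CStY] CSt])
  also have "(1/x) \<cdot>\<^sub>m CS\<^sup>T * CS + 1\<^sub>m k * 0\<^sub>m k k = (1/x) \<cdot>\<^sub>m (CS\<^sup>T * CS)"
    by (simp only: mult_smult_assoc_mat[OF CSt CS] left_mult_one_mat[OF zero_carrier_mat] right_add_zero_mat[OF smult_carrier_mat[OF W]])
  finally have LK: "?L * ?K = four_block_mat ?Y CS ?BL ((1/x) \<cdot>\<^sub>m (CS\<^sup>T * CS))" .
  have detL: "det ?L = 1"
    by (subst det_four_block_mat_upper_right_zero[OF one_carrier_mat refl sCSt one_carrier_mat]) simp
  have K: "?K \<in> carrier_mat (m+k) (m+k)" using Y CS mCSt by auto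
  have L: "?L \<in> carrier_mat (m+k) (m+k)" using sCSt by auto
  have "det ?K = det (?L * ?K)" using det_mult[OF L K] detL by simp
  also have "\<dots> = det (?Y - CS * (x \<cdot>\<^sub>m Wi) * ?BL) * det ((1/x) \<cdot>\<^sub>m (CS\<^sup>T * CS))"
    unfolding LK
  proof (rule schur_lower[OF Y CS BL smult_carrier_mat[OF W] smult_carrier_mat[OF Wi]])
    show "x \<cdot>\<^sub>m Wi * ((1/x) \<cdot>\<^sub>m (CS\<^sup>T * CS)) = 1\<^sub>m k"
      by (simp only: mult_smult_assoc_mat[OF Wi smult_carrier_mat[OF W]] mult_smult_distrib[OF Wi W] WWi sm_sm)
        (use x in \<open>simp add: one_sm\<close>)
  qed
  also have "det ((1/x) \<cdot>\<^sub>m (CS\<^sup>T * CS)) = (1/x) ^ k * det (CS\<^sup>T * CS)" using W CS by simp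
  also have "?Y - CS * (x \<cdot>\<^sub>m Wi) * ?BL = x \<cdot>\<^sub>m 1\<^sub>m m - (1\<^sub>m m - CS * Wi * CS\<^sup>T) * M"
  proof -
    let ?P = "CS * Wi * CS\<^sup>T"
    have PM: "?P * M \<in> carrier_mat m m" by (rule mult_carrier_mat[OF Pm M])
    have "CS * (x \<cdot>\<^sub>m Wi) * ?BL = x \<cdot>\<^sub>m (CS * Wi * ?BL)"
      by (simp only: mult_smult_distrib[OF CS Wi] mult_smult_assoc_mat[OF CSWi BL])
    also have "CS * Wi * ?BL = (1/x) \<cdot>\<^sub>m (CS * Wi * (CS\<^sup>T * ?Y)) - ?P"
      by (simp only: mult_minus_distrib_mat[OF CSWi smult_carrier_mat[OF CStY] CSt] mult_smult_distrib[OF CSWi CStY])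
    also have "CS * Wi * (CS\<^sup>T * ?Y) = ?P * ?Y" by (rule assoc_mult_mat[OF CSWi CSt Y, symmetric])
    also have "?P * ?Y = x \<cdot>\<^sub>m ?P - ?P * M"
      by (simp only: mult_minus_distrib_mat[OF Pm smult_carrier_mat[OF one_carrier_mat] M] mult_smult_distrib[OF Pm one_carrier_mat] right_mult_one_mat[OF Pm])
    finally have e1: "CS * (x \<cdot>\<^sub>m Wi) * ?BL = x \<cdot>\<^sub>m ((1/x) \<cdot>\<^sub>m (x \<cdot>\<^sub>m ?P - ?P * M) - ?P)" .
    have e2: "(1\<^sub>m m - ?P) * M = M - ?P * M"
      by (simp only: minus_mult_distrib_mat[OF one_carrier_mat Pm M] left_mult_one_mat[OF M])
    show ?thesis unfolding e1 e2
      by (rule eq_matI) (use x M Pm PM in \<open>auto simp: field_simps\<close>)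
  qed
  finally have "det ?K = (1/x) ^ k * det (CS\<^sup>T * CS) * det (x \<cdot>\<^sub>m 1\<^sub>m m - (1\<^sub>m m - CS * Wi * CS\<^sup>T) * M)"
    by simp
  thus ?thesis using x by (simp add: field_simps power_divide)
qed

lemma smult_aux:
  fixes Z :: "real mat"
  assumes "Z \<in> carrier_mat r r" "x \<noteq> 0"
  shows "x \<cdot>\<^sub>m (1\<^sub>m r + (- (1/x)) \<cdot>\<^sub>m Z) = x \<cdot>\<^sub>m 1\<^sub>m r - Z"
  by (rule eq_matI) (use assms in \<open>auto simp: field_simps\<close>)

lemma sylv_x:
  fixes G Q :: "real mat"
  assumes G: "G \<in> carrier_mat m d" and Q: "Q \<in> carrier_mat m m" and x: "x \<noteq> 0"
  shows "x ^ m * det (x \<cdot>\<^sub>m 1\<^sub>m d - G\<^sup>T * Q * G) = x ^ d * det (x \<cdot>\<^sub>m 1\<^sub>m m - Q * G * G\<^sup>T)"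
proof -
  have Gt: "G\<^sup>T \<in> carrier_mat d m" using G by simp
  have QG: "Q * G \<in> carrier_mat m d" by (rule mult_carrier_mat[OF Q G])
  have X: "(- (1/x)) \<cdot>\<^sub>m G\<^sup>T \<in> carrier_mat d m" using Gt by simp
  have Z1: "G\<^sup>T * (Q * G) \<in> carrier_mat d d" by (rule mult_carrier_mat[OF Gt QG])
  have Z2: "Q * G * G\<^sup>T \<in> carrier_mat m m" by (rule mult_carrier_mat[OF QG Gt])
  have "x \<cdot>\<^sub>m 1\<^sub>m d - G\<^sup>T * Q * G = x \<cdot>\<^sub>m (1\<^sub>m d + (- (1/x)) \<cdot>\<^sub>m G\<^sup>T * (Q * G))"
    by (simp only: mult_smult_assoc_mat[OF Gt QG] smult_aux[OF Z1 x] assoc_mult_mat[OF Gt Q G])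
  hence 1: "det (x \<cdot>\<^sub>m 1\<^sub>m d - G\<^sup>T * Q * G) = x ^ d * det (1\<^sub>m d + (- (1/x)) \<cdot>\<^sub>m G\<^sup>T * (Q * G))"
    using G Q by simp
  have "x \<cdot>\<^sub>m 1\<^sub>m m - Q * G * G\<^sup>T = x \<cdot>\<^sub>m (1\<^sub>m m + Q * G * ((- (1/x)) \<cdot>\<^sub>m G\<^sup>T))"
    by (simp only: mult_smult_distrib[OF QG Gt] smult_aux[OF Z2 x])
  hence 2: "det (x \<cdot>\<^sub>m 1\<^sub>m m - Q * G * G\<^sup>T) = x ^ m * det (1\<^sub>m m + Q * G * ((- (1/x)) \<cdot>\<^sub>m G\<^sup>T))"
    using G Q by simp
  have 3: "det (1\<^sub>m d + (- (1/x)) \<cdot>\<^sub>m G\<^sup>T * (Q * G)) = det (1\<^sub>m m + Q * G * ((- (1/x)) \<cdot>\<^sub>m G\<^sup>T))"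
    by (rule sylvester[OF X QG])
  show ?thesis unfolding 1 2 3 by simp
qed

lemma self_sprod_zero:
  fixes w :: "real vec"
  assumes "w \<bullet> w = 0"
  shows "w = 0\<^sub>v (dim_vec w)"
proof -
  have "(\<Sum>i\<in>{0..<dim_vec w}. w $ i * w $ i) = 0" using assms by (simp add: scalar_prod_def)
  hence "\<forall>i\<in>{0..<dim_vec w}. w $ i * w $ i = 0" by (subst sum_nonneg_eq_0_iff[symmetric]) auto
  thus ?thesis by (intro eq_vecI) auto
qed

lemma QS_zero:
  fixes Y CS :: "real mat"
  assumes Y: "Y \<in> carrier_mat m m" and CS: "CS \<in> carrier_mat m k" and W0: "det (CS\<^sup>T * CS) = 0"
  shows "det (four_block_mat Y CS (- CS\<^sup>T) (0\<^sub>m k k)) = 0"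
proof -
  have CSt: "CS\<^sup>T \<in> carrier_mat k m" using CS by simp
  have W: "CS\<^sup>T * CS \<in> carrier_mat k k" by (rule mult_carrier_mat[OF CSt CS])
  obtain v where v: "v \<in> carrier_vec k" "v \<noteq> 0\<^sub>v k" "(CS\<^sup>T * CS) *\<^sub>v v = 0\<^sub>v k"
    using W0 det_0_iff_vec_prod_zero[OF W] by blast
  let ?w = "CS *\<^sub>v v"
  have w: "?w \<in> carrier_vec m" using CS v by simp
  have "?w \<bullet> ?w = (CS\<^sup>T *\<^sub>v ?w) \<bullet> v" by (rule transpose_vec_mult_scalar[OF CS v(1) w, symmetric])
  also have "CS\<^sup>T *\<^sub>v ?w = 0\<^sub>v k" using assoc_mult_mat_vec[OF CSt CS v(1)] v(3) by simp
  finally have "?w \<bullet> ?w = 0" using v by simp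
  hence w0: "?w = 0\<^sub>v m" using self_sprod_zero[of ?w] CS by simp
  let ?K = "four_block_mat Y CS (- CS\<^sup>T) (0\<^sub>m k k)"
  have K: "?K \<in> carrier_mat (m+k) (m+k)" using Y CS by auto
  have z: "0\<^sub>v m @\<^sub>v v \<in> carrier_vec (m+k)" using v by simp
  have nz: "0\<^sub>v m @\<^sub>v v \<noteq> 0\<^sub>v (m+k)"
  proof
    assume eq: "0\<^sub>v m @\<^sub>v v = 0\<^sub>v (m+k)"
    have "v = 0\<^sub>v k"
    proof (rule eq_vecI)
      fix i assume "i < dim_vec (0\<^sub>v k :: real vec)"
      hence i: "i < k" by simp
      have "(0\<^sub>v m @\<^sub>v v) $ (m + i) = v $ i" using v(1) i by simp
      thus "v $ i = 0\<^sub>v k $ i" using eq i by simp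
    qed (use v in simp)
    thus False using v(2) by simp
  qed
  have a1: "Y *\<^sub>v 0\<^sub>v m = 0\<^sub>v m" using Y by (intro eq_vecI) auto
  have a2: "- CS\<^sup>T *\<^sub>v 0\<^sub>v m = 0\<^sub>v k" using CSt by (intro eq_vecI) auto
  have a3: "0\<^sub>m k k *\<^sub>v v = 0\<^sub>v k" using v(1) by (intro eq_vecI) auto
  have "?K *\<^sub>v (0\<^sub>v m @\<^sub>v v) = (Y *\<^sub>v 0\<^sub>v m + CS *\<^sub>v v) @\<^sub>v (- CS\<^sup>T *\<^sub>v 0\<^sub>v m + 0\<^sub>m k k *\<^sub>v v)"
    by (rule four_block_mat_mult_vec[OF Y CS uminus_carrier_mat[OF CSt] zero_carrier_mat zero_carrier_vec v(1)])
  also have "\<dots> = (0\<^sub>v m + 0\<^sub>v m) @\<^sub>v (0\<^sub>v k + 0\<^sub>v k)" unfolding a1 a2 a3 w0 ..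
  also have "\<dots> = 0\<^sub>v (m+k)" by (intro eq_vecI) auto
  finally show ?thesis using det_0_iff_vec_prod_zero[OF K] z nz by blast
qed

lemma pick_interval: "i < m \<Longrightarrow> pick {0..<m} i = i"
proof (induction i)
  case 0
  show ?case by (simp, rule Least_equality) (use 0 in auto)
next
  case (Suc i)
  show ?case using Suc by (simp, intro Least_equality) auto
qed

lemma pick_image:
  assumes "finite S"
  shows "pick S ` {0..<card S} = S" and "inj_on (pick S) {0..<card S}"
proof -
  show inj: "inj_on (pick S) {0..<card S}"
  proof (rule inj_onI)
    fix i j assume i: "i \<in> {0..<card S}" and j: "j \<in> {0..<card S}" and e: "pick S i = pick S j"
    show "i = j"
    proof (rule ccontr)
      assume "i \<noteq> j"
      hence "i < j \<or> j < i" by arith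
      thus False using pick_mono_le[of j S i] pick_mono_le[of i S j] i j e by auto
    qed
  qed
  have sub: "pick S ` {0..<card S} \<subseteq> S" using pick_in_set_le by auto
  have "card (pick S ` {0..<card S}) = card S" using card_image[OF inj] by simp
  thus "pick S ` {0..<card S} = S" using card_subset_eq[OF assms sub] by simp
qed

lemma submatrix_cols:
  fixes C :: "real mat"
  assumes C: "C \<in> carrier_mat m N" and S: "S \<subseteq> {0..<N}"
  shows "submatrix C {0..<m} S \<in> carrier_mat m (card S)"
    and "\<And>i j. i < m \<Longrightarrow> j < card S \<Longrightarrow> submatrix C {0..<m} S $$ (i,j) = C $$ (i, pick S j)"
proof -
  have c1: "card {i. i < dim_row C \<and> i \<in> {0..<m}} = m" using C by simp
  have "{j. j < dim_col C \<and> j \<in> S} = S" using C S by auto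
  hence c2: "card {j. j < dim_col C \<and> j \<in> S} = card S" by simp
  show "submatrix C {0..<m} S \<in> carrier_mat m (card S)"
    unfolding carrier_mat_def using dim_submatrix[of C "{0..<m}" S] c1 c2 by simp
  fix i j assume "i < m" "j < card S"
  thus "submatrix C {0..<m} S $$ (i,j) = C $$ (i, pick S j)"
    using submatrix_index[of i C "{0..<m}" j S] c1 c2 pick_interval by simp
qed

lemma det_block_smult:
  fixes Y C :: "real mat"
  assumes Y: "Y \<in> carrier_mat m m" and C: "C \<in> carrier_mat m N" and s: "s \<noteq> 0"
  shows "det (four_block_mat Y C (- C\<^sup>T) (s \<cdot>\<^sub>m 1\<^sub>m N)) = s ^ N * det (Y + (1/s) \<cdot>\<^sub>m (C * C\<^sup>T))"
proof -
  have Ct: "C\<^sup>T \<in> carrier_mat N m" using C by simp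
  have CCt: "C * C\<^sup>T \<in> carrier_mat m m" by (rule mult_carrier_mat[OF C Ct])
  have "det (four_block_mat Y C (- C\<^sup>T) (s \<cdot>\<^sub>m 1\<^sub>m N))
      = det (Y - C * ((1/s) \<cdot>\<^sub>m 1\<^sub>m N) * (- C\<^sup>T)) * det (s \<cdot>\<^sub>m 1\<^sub>m N)"
  proof (rule schur_lower[OF Y C uminus_carrier_mat[OF Ct] smult_carrier_mat[OF one_carrier_mat] smult_carrier_mat[OF one_carrier_mat]])
    show "(1/s) \<cdot>\<^sub>m 1\<^sub>m N * (s \<cdot>\<^sub>m 1\<^sub>m N) = 1\<^sub>m N"
      using s by (simp only: mult_smult_assoc_mat[OF one_carrier_mat smult_carrier_mat[OF one_carrier_mat]]
          mult_smult_distrib[OF one_carrier_mat one_carrier_mat] left_mult_one_mat[OF one_carrier_mat] sm_sm) (simp add: one_sm)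
  qed
  also have "C * ((1/s) \<cdot>\<^sub>m 1\<^sub>m N) * (- C\<^sup>T) = - ((1/s) \<cdot>\<^sub>m (C * C\<^sup>T))"
    by (simp only: mult_smult_distrib[OF C one_carrier_mat] right_mult_one_mat[OF C] mult_smult_assoc_mat[OF C uminus_carrier_mat[OF Ct]] uminus_mult_right_mat)
      (rule eq_matI, use CCt in auto)
  also have "Y - - ((1/s) \<cdot>\<^sub>m (C * C\<^sup>T)) = Y + (1/s) \<cdot>\<^sub>m (C * C\<^sup>T)"
    by (rule eq_matI) (use Y CCt in auto)
  also have "det (s \<cdot>\<^sub>m 1\<^sub>m N) = s ^ N" by simp
  finally show ?thesis by simp
qed

lemma QS_detI:
  fixes Y C :: "real mat"
  assumes Y: "Y \<in> carrier_mat m m" and C: "C \<in> carrier_mat m N" and S: "S \<subseteq> {0..<N}"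
  shows "detI (\<lambda>i j. four_block_mat Y C (- C\<^sup>T) (0\<^sub>m N N) $$ (i,j)) ({0..<m} \<union> (\<lambda>j. m + j) ` S)
       = det (four_block_mat Y (submatrix C {0..<m} S) (- (submatrix C {0..<m} S)\<^sup>T) (0\<^sub>m (card S) (card S)))"
proof -
  let ?k = "card S"
  let ?CS = "submatrix C {0..<m} S"
  have finS: "finite S" using S finite_subset by blast
  have CS: "?CS \<in> carrier_mat m ?k" by (rule submatrix_cols(1)[OF C S])
  have CSe: "\<And>i j. i < m \<Longrightarrow> j < ?k \<Longrightarrow> ?CS $$ (i,j) = C $$ (i, pick S j)"
    by (rule submatrix_cols(2)[OF C S])
  have pS: "\<And>j. j < ?k \<Longrightarrow> pick S j \<in> S" using pick_image(1)[OF finS] by auto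
  have pN: "\<And>j. j < ?k \<Longrightarrow> pick S j < N"
  proof -
    fix j assume "j < ?k"
    hence "pick S j \<in> S" by (rule pS)
    thus "pick S j < N" using S by auto
  qed
  define f where "f i = (if i < m then i else m + pick S (i - m))" for i
  have img: "f ` {0..<m + ?k} = {0..<m} \<union> (\<lambda>j. m + j) ` S"
  proof
    show "f ` {0..<m + ?k} \<subseteq> {0..<m} \<union> (\<lambda>j. m + j) ` S"
      using pS by (auto simp: f_def)
    show "{0..<m} \<union> (\<lambda>j. m + j) ` S \<subseteq> f ` {0..<m + ?k}"
    proof
      fix x assume "x \<in> {0..<m} \<union> (\<lambda>j. m + j) ` S"
      then consider "x < m" | y where "y \<in> S" "x = m + y" by auto
      thus "x \<in> f ` {0..<m + ?k}"
      proof cases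
        case 1 thus ?thesis by (auto simp: f_def intro!: image_eqI[of x])
      next
        case 2
        have "y \<in> pick S ` {0..<?k}" using 2 pick_image(1)[OF finS] by simp
        then obtain j where j: "j < ?k" "y = pick S j" by auto
        have "f (m + j) = x" using 2 j by (simp add: f_def)
        thus ?thesis using j by (auto intro!: image_eqI[of x f "m+j"])
      qed
    qed
  qed
  have inj: "inj_on f {0..<m + ?k}"
  proof (rule inj_onI)
    fix i j assume i: "i \<in> {0..<m + ?k}" and j: "j \<in> {0..<m + ?k}" and e: "f i = f j"
    show "i = j"
    proof (cases "i < m"; cases "j < m")
      assume "\<not> i < m" "\<not> j < m"
      hence "pick S (i - m) = pick S (j - m)" using e by (simp add: f_def)
      hence "i - m = j - m" using inj_onD[OF pick_image(2)[OF finS]] i j \<open>\<not> i < m\<close> \<open>\<not> j < m\<close> by auto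
      thus ?thesis using \<open>\<not> i < m\<close> \<open>\<not> j < m\<close> by simp
    qed (use e in \<open>auto simp: f_def\<close>)
  qed
  have "detI (\<lambda>i j. four_block_mat Y C (- C\<^sup>T) (0\<^sub>m N N) $$ (i,j)) ({0..<m} \<union> (\<lambda>j. m + j) ` S)
      = detI (\<lambda>i j. four_block_mat Y C (- C\<^sup>T) (0\<^sub>m N N) $$ (f i, f j)) {0..<m + ?k}"
    unfolding img[symmetric] by (rule detI_reindex[OF inj]) simp
  also have "\<dots> = detI (\<lambda>i j. four_block_mat Y ?CS (- ?CS\<^sup>T) (0\<^sub>m ?k ?k) $$ (i,j)) {0..<m + ?k}"
  proof (rule detI_cong)
    fix i j assume i: "i \<in> {0..<m + ?k}" and j: "j \<in> {0..<m + ?k}"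
    have fi: "f i < m + N" using i pN by (auto simp: f_def)
    have fj: "f j < m + N" using j pN by (auto simp: f_def)
    show "four_block_mat Y C (- C\<^sup>T) (0\<^sub>m N N) $$ (f i, f j) = four_block_mat Y ?CS (- ?CS\<^sup>T) (0\<^sub>m ?k ?k) $$ (i,j)"
      using i j fi fj Y C CS CSe pN by (auto simp: f_def)
  qed
  also have "\<dots> = det (four_block_mat Y ?CS (- ?CS\<^sup>T) (0\<^sub>m ?k ?k))"
    by (rule det_detI[symmetric]) (use Y CS in auto)
  finally show ?thesis .
qed

definition QS :: "real mat \<Rightarrow> real mat \<Rightarrow> nat \<Rightarrow> nat set \<Rightarrow> real" where
  "QS Y C m S = det (four_block_mat Y (submatrix C {0..<m} S) (- (submatrix C {0..<m} S)\<^sup>T) (0\<^sub>m (card S) (card S)))"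

lemma det_block_expand:
  fixes Y C :: "real mat"
  assumes Y: "Y \<in> carrier_mat m m" and C: "C \<in> carrier_mat m N"
  shows "det (four_block_mat Y C (- C\<^sup>T) (s \<cdot>\<^sub>m 1\<^sub>m N)) = (\<Sum>S\<in>Pow {0..<N}. s ^ (N - card S) * QS Y C m S)"
proof -
  let ?K0 = "\<lambda>i j. four_block_mat Y C (- C\<^sup>T) (0\<^sub>m N N) $$ (i,j)"
  let ?z = "\<lambda>i. if i < m then 0 else s"
  have Ct: "C\<^sup>T \<in> carrier_mat N m" using C by simp
  have K: "four_block_mat Y C (- C\<^sup>T) (s \<cdot>\<^sub>m 1\<^sub>m N) \<in> carrier_mat (m+N) (m+N)" using Y C by auto
  have "det (four_block_mat Y C (- C\<^sup>T) (s \<cdot>\<^sub>m 1\<^sub>m N))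
      = detI (\<lambda>i j. four_block_mat Y C (- C\<^sup>T) (s \<cdot>\<^sub>m 1\<^sub>m N) $$ (i,j)) {0..<m+N}"
    by (rule det_detI[OF K])
  also have "\<dots> = detI (\<lambda>i j. (if i = j then ?z i else 0) + ?K0 i j) {0..<m+N}"
    by (rule detI_cong) (use Y C Ct in auto)
  also have "\<dots> = (\<Sum>A\<in>Pow {0..<m+N}. (\<Prod>i\<in>{0..<m+N}-A. ?z i) * detI ?K0 A)"
    by (rule detI_expand) simp
  also have "\<dots> = (\<Sum>A\<in>{A\<in>Pow {0..<m+N}. {0..<m} \<subseteq> A}. (\<Prod>i\<in>{0..<m+N}-A. ?z i) * detI ?K0 A)"
  proof (rule sum.mono_neutral_right)
    show "\<forall>A\<in>Pow {0..<m+N} - {A\<in>Pow {0..<m+N}. {0..<m} \<subseteq> A}. (\<Prod>i\<in>{0..<m+N}-A. ?z i) * detI ?K0 A = 0"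
    proof
      fix A assume "A \<in> Pow {0..<m+N} - {A\<in>Pow {0..<m+N}. {0..<m} \<subseteq> A}"
      hence "\<not> {0..<m} \<subseteq> A" by simp
      then obtain i where i0: "i \<in> {0..<m}" "i \<notin> A" by blast
      hence i: "i < m" "i \<notin> A" by auto
      have "(\<Prod>i\<in>{0..<m+N}-A. ?z i) = 0" using i by (intro prod_zero) (auto intro!: bexI[of _ i])
      thus "(\<Prod>i\<in>{0..<m+N}-A. ?z i) * detI ?K0 A = 0" by simp
    qed
  qed auto
  also have "\<dots> = (\<Sum>S\<in>Pow {0..<N}. (\<Prod>i\<in>{0..<m+N}-({0..<m} \<union> (\<lambda>j. m + j) ` S). ?z i) * detI ?K0 ({0..<m} \<union> (\<lambda>j. m + j) ` S))"
  proof (rule sum.reindex_bij_betw[symmetric])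
    show "bij_betw (\<lambda>S. {0..<m} \<union> (\<lambda>j. m + j) ` S) (Pow {0..<N}) {A\<in>Pow {0..<m+N}. {0..<m} \<subseteq> A}"
    proof (rule bij_betw_byWitness[where f'="\<lambda>A. {j. m + j \<in> A}"])
      show "\<forall>S\<in>Pow {0..<N}. {j. m + j \<in> {0..<m} \<union> (\<lambda>j. m + j) ` S} = S" by auto
      show "\<forall>A\<in>{A\<in>Pow {0..<m+N}. {0..<m} \<subseteq> A}. {0..<m} \<union> (\<lambda>j. m + j) ` {j. m + j \<in> A} = A"
      proof
        fix A assume A: "A \<in> {A\<in>Pow {0..<m+N}. {0..<m} \<subseteq> A}"
        show "{0..<m} \<union> (\<lambda>j. m + j) ` {j. m + j \<in> A} = A"
        proof
          show "A \<subseteq> {0..<m} \<union> (\<lambda>j. m + j) ` {j. m + j \<in> A}"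
          proof
            fix x assume "x \<in> A"
            thus "x \<in> {0..<m} \<union> (\<lambda>j. m + j) ` {j. m + j \<in> A}"
              by (cases "x < m") (auto intro!: image_eqI[of x _ "x - m"])
          qed
        qed (use A in auto)
      qed
      show "(\<lambda>S. {0..<m} \<union> (\<lambda>j. m + j) ` S) ` Pow {0..<N} \<subseteq> {A\<in>Pow {0..<m+N}. {0..<m} \<subseteq> A}" by auto
      show "(\<lambda>A. {j. m + j \<in> A}) ` {A\<in>Pow {0..<m+N}. {0..<m} \<subseteq> A} \<subseteq> Pow {0..<N}" by auto
    qed
  qed
  also have "\<dots> = (\<Sum>S\<in>Pow {0..<N}. s ^ (N - card S) * QS Y C m S)"
  proof (rule sum.cong[OF refl])
    fix S assume S: "S \<in> Pow {0..<N}"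
    hence S': "S \<subseteq> {0..<N}" by simp
    have "{0..<m+N}-({0..<m} \<union> (\<lambda>j. m + j) ` S) = (\<lambda>j. m + j) ` ({0..<N} - S)"
    proof
      show "{0..<m+N}-({0..<m} \<union> (\<lambda>j. m + j) ` S) \<subseteq> (\<lambda>j. m + j) ` ({0..<N} - S)"
      proof
        fix x assume "x \<in> {0..<m+N}-({0..<m} \<union> (\<lambda>j. m + j) ` S)"
        thus "x \<in> (\<lambda>j. m + j) ` ({0..<N} - S)" by (auto intro!: image_eqI[of x _ "x - m"])
      qed
    qed auto
    hence "(\<Prod>i\<in>{0..<m+N}-({0..<m} \<union> (\<lambda>j. m + j) ` S). ?z i) = (\<Prod>j\<in>{0..<N} - S. ?z (m + j))"
      by (simp add: prod.reindex)
    also have "\<dots> = s ^ (N - card S)"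
      using S' by (simp add: card_Diff_subset finite_subset)
    finally have 1: "(\<Prod>i\<in>{0..<m+N}-({0..<m} \<union> (\<lambda>j. m + j) ` S). ?z i) = s ^ (N - card S)" .
    show "(\<Prod>i\<in>{0..<m+N}-({0..<m} \<union> (\<lambda>j. m + j) ` S). ?z i) * detI ?K0 ({0..<m} \<union> (\<lambda>j. m + j) ` S)
        = s ^ (N - card S) * QS Y C m S"
      unfolding 1 QS_def QS_detI[OF Y C S'] ..
  qed
  finally show ?thesis .
qed

lemma coeff_compare:
  fixes a :: "'x \<Rightarrow> real" and c :: "'y \<Rightarrow> real"
  assumes F: "finite F" and H: "finite H"
    and eq: "\<And>t. t \<noteq> 0 \<Longrightarrow> (\<Sum>x\<in>F. t ^ (g x) * a x) = (\<Sum>y\<in>H. t ^ (h y) * c y)"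
  shows "(\<Sum>x\<in>{x\<in>F. g x = k}. a x) = (\<Sum>y\<in>{y\<in>H. h y = k}. c y)"
proof -
  define P where "P = (\<Sum>x\<in>F. monom (a x) (g x)) - (\<Sum>y\<in>H. monom (c y) (h y))"
  have ev: "poly P t = (\<Sum>x\<in>F. t ^ (g x) * a x) - (\<Sum>y\<in>H. t ^ (h y) * c y)" for t
    unfolding P_def by (simp add: poly_sum poly_monom mult.commute)
  have P0: "P = 0"
  proof (rule ccontr)
    assume "P \<noteq> 0"
    hence fin: "finite {t. poly P t = 0}" by (rule poly_roots_finite)
    have "{t::real. t \<noteq> 0} \<subseteq> {t. poly P t = 0}" using ev eq by auto
    hence "finite {t::real. t \<noteq> 0}" using fin finite_subset by blast
    moreover have "infinite {t::real. t \<noteq> 0}"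
    proof
      assume "finite {t::real. t \<noteq> 0}"
      hence "finite ({t::real. t \<noteq> 0} \<union> {0})" by simp
      moreover have "{t::real. t \<noteq> 0} \<union> {0} = UNIV" by auto
      ultimately show False by (simp add: infinite_UNIV_char_0)
    qed
    ultimately show False by simp
  qed
  have "coeff P k = (\<Sum>x\<in>F. if g x = k then a x else 0) - (\<Sum>y\<in>H. if h y = k then c y else 0)"
    unfolding P_def by (simp add: coeff_sum coeff_monom)
  also have "\<dots> = (\<Sum>x\<in>{x\<in>F. g x = k}. a x) - (\<Sum>y\<in>{y\<in>H. h y = k}. c y)"
    by (simp add: sum.inter_filter[OF F] sum.inter_filter[OF H])
  finally show ?thesis using P0 by simp
qed

lemma det_diag_plus:
  fixes Y :: "real mat"
  assumes Y: "Y \<in> carrier_mat m m"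
  shows "det (Y + t \<cdot>\<^sub>m mat_diag m b) = (\<Sum>A\<in>Pow {0..<m}. t ^ (m - card A) * ((\<Prod>i\<in>{0..<m}-A. b i) * detI (\<lambda>i j. Y $$ (i,j)) A))"
proof -
  have "det (Y + t \<cdot>\<^sub>m mat_diag m b) = detI (\<lambda>i j. (Y + t \<cdot>\<^sub>m mat_diag m b) $$ (i,j)) {0..<m}"
    by (rule det_detI) (use Y in simp)
  also have "\<dots> = detI (\<lambda>i j. (if i = j then t * b i else 0) + Y $$ (i,j)) {0..<m}"
    by (rule detI_cong) (use Y in \<open>auto simp: mat_diag_def\<close>)
  also have "\<dots> = (\<Sum>A\<in>Pow {0..<m}. (\<Prod>i\<in>{0..<m}-A. t * b i) * detI (\<lambda>i j. Y $$ (i,j)) A)"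
    by (rule detI_expand) simp
  also have "\<dots> = (\<Sum>A\<in>Pow {0..<m}. t ^ (m - card A) * ((\<Prod>i\<in>{0..<m}-A. b i) * detI (\<lambda>i j. Y $$ (i,j)) A))"
  proof (rule sum.cong[OF refl])
    fix A assume "A \<in> Pow {0..<m}"
    hence "card ({0..<m} - A) = m - card A" by (simp add: card_Diff_subset finite_subset)
    thus "(\<Prod>i\<in>{0..<m}-A. t * b i) * detI (\<lambda>i j. Y $$ (i,j)) A = t ^ (m - card A) * ((\<Prod>i\<in>{0..<m}-A. b i) * detI (\<lambda>i j. Y $$ (i,j)) A)"
      by (simp add: prod.distrib)
  qed
  finally show ?thesis .
qed

lemma main_identity:
  fixes Y C :: "real mat"
  assumes Y: "Y \<in> carrier_mat m m" and C: "C \<in> carrier_mat m N" and CC: "C * C\<^sup>T = mat_diag m b"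
  shows "(\<Sum>S\<in>{S\<in>Pow {0..<N}. card S = k}. QS Y C m S)
       = (\<Sum>A\<in>{A\<in>Pow {0..<m}. m - card A = k}. (\<Prod>i\<in>{0..<m}-A. b i) * detI (\<lambda>i j. Y $$ (i,j)) A)"
proof (rule coeff_compare)
  fix t :: real assume t: "t \<noteq> 0"
  let ?s = "1 / t"
  have s: "?s \<noteq> 0" using t by simp
  have "?s ^ N * det (Y + t \<cdot>\<^sub>m mat_diag m b) = (\<Sum>S\<in>Pow {0..<N}. ?s ^ (N - card S) * QS Y C m S)"
    using det_block_smult[OF Y C s] det_block_expand[OF Y C, of ?s] CC by simp
  hence "t ^ N * (?s ^ N * det (Y + t \<cdot>\<^sub>m mat_diag m b)) = (\<Sum>S\<in>Pow {0..<N}. t ^ N * ?s ^ (N - card S) * QS Y C m S)"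
    by (simp add: sum_distrib_left mult.assoc)
  also have "\<dots> = (\<Sum>S\<in>Pow {0..<N}. t ^ card S * QS Y C m S)"
  proof (rule sum.cong[OF refl])
    fix S assume "S \<in> Pow {0..<N}"
    hence cS: "card S \<le> N" using card_mono[of "{0..<N}" S] by simp
    have "t ^ N = t ^ card S * t ^ (N - card S)" using cS by (simp add: power_add[symmetric])
    hence "t ^ N * ?s ^ (N - card S) = t ^ card S * (t ^ (N - card S) * ?s ^ (N - card S))" by simp
    also have "t ^ (N - card S) * ?s ^ (N - card S) = 1" using t by (simp add: power_mult_distrib[symmetric])
    finally show "t ^ N * ?s ^ (N - card S) * QS Y C m S = t ^ card S * QS Y C m S" by simp
  qed
  finally have 0: "t ^ N * (?s ^ N * det (Y + t \<cdot>\<^sub>m mat_diag m b)) = (\<Sum>S\<in>Pow {0..<N}. t ^ card S * QS Y C m S)" .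
  have tt: "t ^ N * ?s ^ N = 1" using t by (simp add: power_mult_distrib[symmetric])
  have "det (Y + t \<cdot>\<^sub>m mat_diag m b) = t ^ N * (?s ^ N * det (Y + t \<cdot>\<^sub>m mat_diag m b))"
    by (simp only: mult.assoc[symmetric] tt mult_1)
  hence 1: "det (Y + t \<cdot>\<^sub>m mat_diag m b) = (\<Sum>S\<in>Pow {0..<N}. t ^ card S * QS Y C m S)"
    using 0 by simp
  show "(\<Sum>S\<in>Pow {0..<N}. t ^ card S * QS Y C m S)
      = (\<Sum>A\<in>Pow {0..<m}. t ^ (m - card A) * ((\<Prod>i\<in>{0..<m}-A. b i) * detI (\<lambda>i j. Y $$ (i,j)) A))"
    unfolding 1[symmetric] by (rule det_diag_plus[OF Y])
qed auto

lemma inv_exists: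
  fixes W :: "real mat"
  assumes W: "W \<in> carrier_mat k k" and d: "det W \<noteq> 0"
  obtains Wi where "Wi \<in> carrier_mat k k" "Wi * W = 1\<^sub>m k" "W * Wi = 1\<^sub>m k"
proof -
  have "W \<in> Units (ring_mat TYPE(real) k ())" by (rule det_non_zero_imp_unit[OF W d])
  then obtain Wi where "Wi \<in> carrier_mat k k" "Wi * W = 1\<^sub>m k" "W * Wi = 1\<^sub>m k"
    unfolding Units_def by (auto simp: ring_mat_simps)
  thus ?thesis using that by blast
qed

lemma arith4:
  fixes a c e f g q w :: real
  assumes "a * e = c * f" "w * f = g * q"
  shows "a * (w * e) = c * g * q"
proof -
  have "a * (w * e) = w * (a * e)" by (simp only: mult.left_commute)
  also have "\<dots> = w * (c * f)" using assms(1) by simp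
  also have "\<dots> = c * (w * f)" by (simp only: mult.left_commute)
  also have "\<dots> = c * (g * q)" using assms(2) by simp
  finally show ?thesis by (simp only: mult.assoc)
qed

context ctx5
begin

definition "M = G * G\<^sup>T"

lemma cM: "M \<in> carrier_mat m m" unfolding M_def by (rule mult_carrier_mat[OF cG cGt])

lemma M_alt: "U\<^sup>T * A * A\<^sup>T * U = M"
proof -
  have UtA: "U\<^sup>T * A \<in> carrier_mat m d" by (rule mult_carrier_mat[OF cUt A])
  have "G\<^sup>T = A\<^sup>T * U" unfolding G_def by (simp only: transpose_mult[OF cUt A] transpose_transpose)
  hence "M = U\<^sup>T * A * (A\<^sup>T * U)" unfolding M_def G_def by simp
  also have "\<dots> = U\<^sup>T * A * A\<^sup>T * U" by (rule assoc_mult_mat[OF UtA cAt U, symmetric])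
  finally show ?thesis by simp
qed

lemma colsub_UC:
  assumes S: "S \<subseteq> {0..<dB}"
  shows "colsub B S = U * submatrix C {0..<m} S"
proof -
  have CS: "submatrix C {0..<m} S \<in> carrier_mat m (card S)" by (rule submatrix_cols(1)[OF cC S])
  have BS: "submatrix B {0..<n} S \<in> carrier_mat n (card S)" by (rule submatrix_cols(1)[OF B S])
  have fS: "finite S" using S finite_subset by blast
  show ?thesis unfolding colsub_def dims(3)
  proof (rule eq_matI)
    fix i j assume i: "i < dim_row (U * submatrix C {0..<m} S)" and j: "j < dim_col (U * submatrix C {0..<m} S)"
    hence i': "i < n" and j': "j < card S" using CS U by auto
    have pj: "pick S j < dB" using pick_in_set_le[OF j'] S by auto
    have "submatrix B {0..<n} S $$ (i,j) = B $$ (i, pick S j)" by (rule submatrix_cols(2)[OF B S i' j'])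
    also have "\<dots> = (U * C) $$ (i, pick S j)" using B_UC by simp
    also have "\<dots> = row U i \<bullet> col C (pick S j)" using i' pj U cC by simp
    finally have e1: "submatrix B {0..<n} S $$ (i,j) = row U i \<bullet> col C (pick S j)" .
    have e2: "col C (pick S j) = col (submatrix C {0..<m} S) j"
      by (rule eq_vecI) (use CS cC j' pj submatrix_cols(2)[OF cC S] in auto)
    have e3: "(U * submatrix C {0..<m} S) $$ (i,j) = row U i \<bullet> col (submatrix C {0..<m} S) j"
      using i' j' U CS by simp
    show "submatrix B {0..<n} S $$ (i,j) = (U * submatrix C {0..<m} S) $$ (i,j)"
      unfolding e1 e2 e3 ..
  qed (use BS CS U in auto)
qed

lemma term_eq:
  assumes S: "S \<subseteq> {0..<dB}" and x: "x \<noteq> 0"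
  shows "x ^ m * (det ((colsub B S)\<^sup>T * colsub B S) *
           det (x \<cdot>\<^sub>m 1\<^sub>m d - (B * pinv B * A)\<^sup>T * (1\<^sub>m n - colsub B S * pinv (colsub B S)) * (B * pinv B * A)))
       = x ^ d * x ^ card S * QS (x \<cdot>\<^sub>m 1\<^sub>m m - M) C m S"
proof -
  let ?k = "card S"
  let ?CS = "submatrix C {0..<m} S"
  let ?BS = "colsub B S"
  let ?Y = "x \<cdot>\<^sub>m 1\<^sub>m m - M"
  have CS: "?CS \<in> carrier_mat m ?k" by (rule submatrix_cols(1)[OF cC S])
  have CSt: "?CS\<^sup>T \<in> carrier_mat ?k m" using CS by simp
  have BS: "?BS = U * ?CS" by (rule colsub_UC[OF S])
  have cBS: "?BS \<in> carrier_mat n ?k" unfolding BS by (rule mult_carrier_mat[OF U CS])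
  have BSt: "?BS\<^sup>T = ?CS\<^sup>T * U\<^sup>T" unfolding BS by (rule transpose_mult[OF U CS])
  have cBSt: "?BS\<^sup>T \<in> carrier_mat ?k n" using cBS by simp
  have W: "?CS\<^sup>T * ?CS \<in> carrier_mat ?k ?k" by (rule mult_carrier_mat[OF CSt CS])
  have UtBS: "U\<^sup>T * ?BS = ?CS" unfolding BS
    by (simp only: assoc_mult_mat[OF cUt U CS, symmetric] UU left_mult_one_mat[OF CS])
  have BtB: "?BS\<^sup>T * ?BS = ?CS\<^sup>T * ?CS" unfolding BSt
    by (simp only: assoc_mult_mat[OF CSt cUt cBS] UtBS)
  have Y: "?Y \<in> carrier_mat m m" by (rule minus_carrier_mat[OF cM])
  show ?thesis
  proof (cases "det (?CS\<^sup>T * ?CS) = 0")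
    case True
    have "QS ?Y C m S = 0" unfolding QS_def by (rule QS_zero[OF Y CS True])
    thus ?thesis unfolding BtB True by simp
  next
    case False
    obtain Wi where Wi: "Wi \<in> carrier_mat ?k ?k" "Wi * (?CS\<^sup>T * ?CS) = 1\<^sub>m ?k" "(?CS\<^sup>T * ?CS) * Wi = 1\<^sub>m ?k"
      using inv_exists[OF W False] by blast
    have Wt: "(?CS\<^sup>T * ?CS)\<^sup>T = ?CS\<^sup>T * ?CS" by (simp only: transpose_mult[OF CSt CS] transpose_transpose)
    have Wit: "Wi\<^sup>T = Wi"
    proof -
      have cWit: "Wi\<^sup>T \<in> carrier_mat ?k ?k" using Wi by simp
      have "Wi\<^sup>T = Wi\<^sup>T * ((?CS\<^sup>T * ?CS) * Wi)" by (simp only: Wi(3) right_mult_one_mat[OF cWit])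
      also have "\<dots> = (Wi\<^sup>T * (?CS\<^sup>T * ?CS)) * Wi" by (rule assoc_mult_mat[OF cWit W Wi(1), symmetric])
      also have "Wi\<^sup>T * (?CS\<^sup>T * ?CS) = 1\<^sub>m ?k"
        by (subst Wt[symmetric], subst transpose_mult[OF W Wi(1), symmetric]) (simp only: Wi(3) transpose_one)
      finally show ?thesis by (simp only: left_mult_one_mat[OF Wi(1)])
    qed
    let ?X = "Wi * ?BS\<^sup>T"
    have cX: "?X \<in> carrier_mat ?k n" by (rule mult_carrier_mat[OF Wi(1) cBSt])
    have XBS: "?X * ?BS = 1\<^sub>m ?k" by (simp only: assoc_mult_mat[OF Wi(1) cBSt cBS] BtB Wi(2))
    have pBS: "pinv ?BS = ?X"
    proof (rule pinv_eq[OF cBS cX])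
      show "?BS * ?X * ?BS = ?BS" by (simp only: assoc_mult_mat[OF cBS cX cBS] XBS right_mult_one_mat[OF cBS])
      show "?X * ?BS * ?X = ?X" by (simp only: XBS left_mult_one_mat[OF cX])
      show "(?X * ?BS)\<^sup>T = ?X * ?BS" by (simp only: XBS transpose_one)
      show "(?BS * ?X)\<^sup>T = ?BS * ?X"
        by (simp only: transpose_mult[OF cBS cX] transpose_mult[OF Wi(1) cBSt] transpose_transpose Wit
              assoc_mult_mat[OF cBS Wi(1) cBSt])
    qed
    let ?P = "?CS * Wi * ?CS\<^sup>T"
    have CSWi: "?CS * Wi \<in> carrier_mat m ?k" by (rule mult_carrier_mat[OF CS Wi(1)])
    have cP: "?P \<in> carrier_mat m m" by (rule mult_carrier_mat[OF CSWi CSt])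
    have cQ: "1\<^sub>m m - ?P \<in> carrier_mat m m" by (rule minus_carrier_mat[OF cP])
    have BSpBS: "?BS * pinv ?BS = U * ?P * U\<^sup>T"
    proof -
      have "?BS * pinv ?BS = U * ?CS * (Wi * (?CS\<^sup>T * U\<^sup>T))" unfolding pBS BSt by (simp only: BS)
      also have "\<dots> = U * (?CS * (Wi * (?CS\<^sup>T * U\<^sup>T)))" by (rule assoc_mult_mat[OF U CS mult_carrier_mat[OF Wi(1) mult_carrier_mat[OF CSt cUt]]])
      also have "?CS * (Wi * (?CS\<^sup>T * U\<^sup>T)) = ?P * U\<^sup>T"
        by (simp only: assoc_mult_mat[OF CS Wi(1) mult_carrier_mat[OF CSt cUt], symmetric] assoc_mult_mat[OF CSWi CSt cUt, symmetric])
      also have "U * (?P * U\<^sup>T) = U * ?P * U\<^sup>T" by (rule assoc_mult_mat[OF U cP cUt, symmetric])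
      finally show ?thesis .
    qed
    have UG: "U * G \<in> carrier_mat n d" by (rule mult_carrier_mat[OF U cG])
    have UP: "U * ?P \<in> carrier_mat n m" by (rule mult_carrier_mat[OF U cP])
    have UPUt: "U * ?P * U\<^sup>T \<in> carrier_mat n n" by (rule mult_carrier_mat[OF UP cUt])
    have PG: "?P * G \<in> carrier_mat m d" by (rule mult_carrier_mat[OF cP cG])
    have QG: "(1\<^sub>m m - ?P) * G \<in> carrier_mat m d" by (rule mult_carrier_mat[OF cQ cG])
    have UQG: "U * ((1\<^sub>m m - ?P) * G) \<in> carrier_mat n d" by (rule mult_carrier_mat[OF U QG])
    have inner: "(1\<^sub>m n - U * ?P * U\<^sup>T) * (U * G) = U * ((1\<^sub>m m - ?P) * G)"
    proof -
      have "(1\<^sub>m n - U * ?P * U\<^sup>T) * (U * G) = U * G - U * ?P * U\<^sup>T * (U * G)"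
        by (simp only: minus_mult_distrib_mat[OF one_carrier_mat UPUt UG] left_mult_one_mat[OF UG])
      also have "U * ?P * U\<^sup>T * (U * G) = U * (?P * G)"
        by (simp only: assoc_mult_mat[OF UP cUt UG] assoc_mult_mat[OF cUt U cG, symmetric] UU left_mult_one_mat[OF cG]
             assoc_mult_mat[OF U cP cG])
      also have "U * G - U * (?P * G) = U * (G - ?P * G)" by (rule mult_minus_distrib_mat[OF U cG PG, symmetric])
      also have "G - ?P * G = (1\<^sub>m m - ?P) * G"
        by (simp only: minus_mult_distrib_mat[OF one_carrier_mat cP cG] left_mult_one_mat[OF cG])
      finally show ?thesis .
    qed
    have big: "(B * pinv B * A)\<^sup>T * (1\<^sub>m n - ?BS * pinv ?BS) * (B * pinv B * A) = G\<^sup>T * (1\<^sub>m m - ?P) * G"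
    proof -
      have cI: "1\<^sub>m n - U * ?P * U\<^sup>T \<in> carrier_mat n n" by (rule minus_carrier_mat[OF UPUt])
      have UGt: "(U * G)\<^sup>T \<in> carrier_mat d n" using UG by simp
      have "(B * pinv B * A)\<^sup>T * (1\<^sub>m n - ?BS * pinv ?BS) * (B * pinv B * A)
          = (U * G)\<^sup>T * ((1\<^sub>m n - U * ?P * U\<^sup>T) * (U * G))"
        unfolding Aprime BSpBS by (rule assoc_mult_mat[OF UGt cI UG])
      also have "\<dots> = G\<^sup>T * (U\<^sup>T * (U * ((1\<^sub>m m - ?P) * G)))"
        unfolding inner by (simp only: transpose_mult[OF U cG] assoc_mult_mat[OF cGt cUt UQG])
      also have "U\<^sup>T * (U * ((1\<^sub>m m - ?P) * G)) = (1\<^sub>m m - ?P) * G"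
        by (simp only: assoc_mult_mat[OF cUt U QG, symmetric] UU left_mult_one_mat[OF QG])
      also have "G\<^sup>T * ((1\<^sub>m m - ?P) * G) = G\<^sup>T * (1\<^sub>m m - ?P) * G" by (rule assoc_mult_mat[OF cGt cQ cG, symmetric])
      finally show ?thesis .
    qed
    have sy: "x ^ m * det (x \<cdot>\<^sub>m 1\<^sub>m d - G\<^sup>T * (1\<^sub>m m - ?P) * G) = x ^ d * det (x \<cdot>\<^sub>m 1\<^sub>m m - (1\<^sub>m m - ?P) * M)"
      using sylv_x[OF cG cQ x] unfolding M_def by (simp only: assoc_mult_mat[OF cQ cG cGt])
    have bk: "det (?CS\<^sup>T * ?CS) * det (x \<cdot>\<^sub>m 1\<^sub>m m - (1\<^sub>m m - ?P) * M) = x ^ ?k * QS ?Y C m S"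
      unfolding QS_def by (rule blockK[OF cM CS Wi(1) Wi(2) x])
    show ?thesis unfolding BtB big
      by (rule arith4[OF sy bk])
  qed
qed

end

theorem proposition5p1:
  fixes A B U :: "real mat" and n d dB m k :: nat and b :: "nat \<Rightarrow> real"
  assumes A: "A \<in> carrier_mat n d"
    and B: "B \<in> carrier_mat n dB"
    and rk: "vec_space.rank n (B :: real mat) = m"
    and U: "U \<in> carrier_mat n m"
    and UU: "U\<^sup>T * U = 1\<^sub>m m"
    and BB: "B * B\<^sup>T = U * mat_diag m b * U\<^sup>T"
    and bpos: "\<forall>i<m. b i > 0"
    and k: "1 \<le> k" "k \<le> m"
  shows "(\<forall>z. hk m b k z =
            fact k * (\<Sum>S \<in> {S. S \<subseteq> {0..<m} \<and> card S = m - k}.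
                        (\<Prod>i \<in> {0..<m} - S. b i) * (\<Prod>i \<in> S. z i)))
       \<and> (\<forall>x::real. x \<noteq> 0 \<longrightarrow>
            Pk k x (B * pinv B * A) B =
              x powi (int d + int k - int m) / fact k *
              mixd m (\<lambda>z. hk m b k z * det (mat_diag m z - U\<^sup>T * A * A\<^sup>T * U))
                     (\<lambda>i. x / 2))"
proof -
  interpret ctx5 A B U n d dB m b
    by unfold_locales (use A B U UU BB bpos in auto)
  have Fk_eq: "Fk m k = {S. S \<subseteq> {0..<m} \<and> card S = m - k}"
    unfolding Fk_def atLeast0LessThan ..
  have part1: "\<forall>z. hk m b k z =
            fact k * (\<Sum>S \<in> {S. S \<subseteq> {0..<m} \<and> card S = m - k}.
                        (\<Prod>i \<in> {0..<m} - S. b i) * (\<Prod>i \<in> S. z i))"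
  proof
    fix z
    have "hk m b k z = (\<Sum>S\<in>Fk m k. fact k * (\<Prod>i\<in>{..<m}-S. b i) * (\<Prod>l<m. z l ^ ind S l))"
      unfolding hk_mpoly[OF k(2)] mpoly_def ..
    also have "\<dots> = (\<Sum>S\<in>Fk m k. fact k * ((\<Prod>i\<in>{0..<m}-S. b i) * (\<Prod>i\<in>S. z i)))"
    proof (rule sum.cong[OF refl])
      fix S assume "S \<in> Fk m k"
      hence "S \<subseteq> {..<m}" by (simp add: Fk_def)
      thus "fact k * (\<Prod>i\<in>{..<m}-S. b i) * (\<Prod>l<m. z l ^ ind S l) = fact k * ((\<Prod>i\<in>{0..<m}-S. b i) * (\<Prod>i\<in>S. z i))"
        using mono_ind[of S m z] by (simp add: atLeast0LessThan)
    qed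
    also have "\<dots> = fact k * (\<Sum>S \<in> {S. S \<subseteq> {0..<m} \<and> card S = m - k}. (\<Prod>i \<in> {0..<m} - S. b i) * (\<Prod>i \<in> S. z i))"
      unfolding Fk_eq by (simp add: sum_distrib_left)
    finally show "hk m b k z = fact k * (\<Sum>S \<in> {S. S \<subseteq> {0..<m} \<and> card S = m - k}. (\<Prod>i \<in> {0..<m} - S. b i) * (\<Prod>i \<in> S. z i))" .
  qed
  have part2: "Pk k x (B * pinv B * A) B =
              x powi (int d + int k - int m) / fact k *
              mixd m (\<lambda>z. hk m b k z * det (mat_diag m z - U\<^sup>T * A * A\<^sup>T * U)) (\<lambda>i. x / 2)"
    if x: "x \<noteq> 0" for x :: real
  proof -
    let ?Y = "x \<cdot>\<^sub>m 1\<^sub>m m - M"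
    have Y: "?Y \<in> carrier_mat m m" by (rule minus_carrier_mat[OF cM])
    let ?T = "\<Sum>A\<in>{A\<in>Pow {0..<m}. m - card A = k}. (\<Prod>i\<in>{0..<m}-A. b i) * detI (\<lambda>i j. ?Y $$ (i,j)) A"
    have dA: "dim_col (B * pinv B * A) = d" "dim_row (B * pinv B * A) = n"
      unfolding Aprime using U cG by auto
    have dB': "dim_col B = dB" using B by simp
    have "x ^ m * Pk k x (B * pinv B * A) B
        = (\<Sum>S\<in>{S. S \<subseteq> {0..<dB} \<and> card S = k}. x ^ m * (det ((colsub B S)\<^sup>T * colsub B S) *
           det (x \<cdot>\<^sub>m 1\<^sub>m d - (B * pinv B * A)\<^sup>T * (1\<^sub>m n - colsub B S * pinv (colsub B S)) * (B * pinv B * A))))"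
      unfolding Pk_def dA dB' by (simp add: sum_distrib_left)
    also have "\<dots> = (\<Sum>S\<in>{S. S \<subseteq> {0..<dB} \<and> card S = k}. x ^ d * x ^ k * QS ?Y C m S)"
      by (rule sum.cong[OF refl]) (use term_eq x in auto)
    also have "\<dots> = x ^ d * x ^ k * (\<Sum>S\<in>{S\<in>Pow {0..<dB}. card S = k}. QS ?Y C m S)"
      by (simp add: sum_distrib_left Pow_def)
    also have "(\<Sum>S\<in>{S\<in>Pow {0..<dB}. card S = k}. QS ?Y C m S) = ?T"
      by (rule main_identity[OF Y cC]) (simp add: CCt D_def)
    finally have L: "x ^ m * Pk k x (B * pinv B * A) B = x ^ d * x ^ k * ?T" .
    have setq: "{A\<in>Pow {0..<m}. m - card A = k} = Fk m k"
    proof -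
      have "A \<subseteq> {0..<m} \<Longrightarrow> (m - card A = k) = (card A = m - k)" for A
        using card_mono[of "{0..<m}" A] k(2) by auto
      thus ?thesis unfolding Fk_def atLeast0LessThan by auto
    qed
    have R: "mixd m (\<lambda>z. hk m b k z * det (mat_diag m z - U\<^sup>T * A * A\<^sup>T * U)) (\<lambda>i. x / 2) = fact k * ?T"
    proof -
      have "mixd m (\<lambda>z. hk m b k z * det (mat_diag m z - U\<^sup>T * A * A\<^sup>T * U)) (\<lambda>i. x / 2)
          = (\<Sum>S\<in>Fk m k. fact k * (\<Prod>i\<in>{..<m}-S. b i) * detI (\<lambda>i j. (if i = j then x else 0) + - M $$ (i,j)) S)"
        unfolding M_alt by (rule mixd_formula[OF cM k(2)])
      also have "\<dots> = (\<Sum>S\<in>Fk m k. fact k * ((\<Prod>i\<in>{0..<m}-S. b i) * detI (\<lambda>i j. ?Y $$ (i,j)) S))"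
      proof (rule sum.cong[OF refl])
        fix S assume "S \<in> Fk m k"
        hence Sm: "S \<subseteq> {..<m}" by (simp add: Fk_def)
        have "detI (\<lambda>i j. (if i = j then x else 0) + - M $$ (i,j)) S = detI (\<lambda>i j. ?Y $$ (i,j)) S"
        proof (rule detI_cong)
          fix i j assume "i \<in> S" "j \<in> S"
          hence "i < m" "j < m" using Sm by auto
          thus "(if i = j then x else 0) + - M $$ (i,j) = ?Y $$ (i,j)" using cM by auto
        qed
        thus "fact k * (\<Prod>i\<in>{..<m}-S. b i) * detI (\<lambda>i j. (if i = j then x else 0) + - M $$ (i,j)) S
            = fact k * ((\<Prod>i\<in>{0..<m}-S. b i) * detI (\<lambda>i j. ?Y $$ (i,j)) S)"
          by (simp add: atLeast0LessThan)
      qed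
      also have "\<dots> = fact k * ?T" unfolding setq by (simp add: sum_distrib_left)
      finally show ?thesis .
    qed
    have xm: "x ^ m \<noteq> 0" using x by simp
    have pw: "x powi (int d + int k - int m) = x ^ d * x ^ k / x ^ m"
      using x by (simp add: power_int_diff power_int_add)
    have "Pk k x (B * pinv B * A) B = x ^ d * x ^ k * ?T / x ^ m"
      using L xm by (simp add: field_simps)
    also have "\<dots> = x powi (int d + int k - int m) / fact k * (fact k * ?T)"
      unfolding pw by simp
    finally show ?thesis unfolding R .
  qed
  show ?thesis using part1 part2 by blast
qed

end
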